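(* Let $\mathcal{X}$ be a fuzzy random variable with values in $\mathcal{F}_c(\mathbb{R})$ such that $\mathrm{E}[\|\mathcal{X}_0\|]<\infty$. Then $\mathrm{Med}(\mathcal{X};D_1)=\mathrm{Med}(\mathcal{X};D_{FT})$.
   Context: $\mathcal{F}_c(\mathbb{R})$ is the set of functions $A:\mathbb{R}\to[0,1]$ whose $\alpha$-levels $A_\alpha=\{x:A(x)\ge\alpha\}$ ($\alpha\in(0,1]$) and $A_0=\overline{\{x:A(x)>0\}}$ are non-empty compact intervals. Support function: $s_A(u,\alpha)=\sup\{uv:v\in A_\alpha\}$, $u\in\{-1,1\}$, $\alpha\in[0,1]$. A fuzzy random variable on $(\Omega,\mathcal{A},\mathbb{P})$ is a map $\mathcal{X}:\Omega\to\mathcal{F}_c(\mathbb{R})$ with each $\omega\mapsto\mathcal{X}(\omega)_\alpha$ a random compact set; $s_{\mathcal{X}}(u,\alpha)(\omega)=s_{\mathcal{X}(\omega)}(u,\alpha)$; $\|\mathcal{X}_0\|=\sup\{|x|:x\in\mathcal{X}(\cdot)_0\}$. $\rho_1(A,B)=\int_{\{-1,1\}}\int_0^1|s_A(u,\alpha)-s_B(u,\alpha)|\,d\alpha\,d\mathcal{V}(u)$, $\mathcal{V}$ uniform on $\{-1,1\}$. $D_1(A;\mathcal{X})=(1+\mathrm{E}[\rho_1(A,\mathcal{X})])^{-1}$. $D_{FT}(A;\mathcal{X})=\inf_{u\in\{-1,1\},\alpha\in[0,1]}\min\big(\mathbb{P}[s_{\mathcal{X}}(u,\alpha)\le s_A(u,\alpha)],\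 \mathbb{P}[s_{\mathcal{X}}(u,\alpha)\ge s_A(u,\alpha)]\big)$. For a depth $D$, $\mathrm{Med}(\mathcal{X};D)=\{A\in\mathcal{F}_c(\mathbb{R}):D(A;\mathcal{X})=\max_{U\in\mathcal{F}_c(\mathbb{R})}D(U;\mathcal{X})\}$. *)

theory Defs
  imports "HOL-Probability.Probability"
begin

text \<open>Fuzzy sets on the reals are functions real \<Rightarrow> real (values in [0,1] are required by fuzzy_Fc).\<close>

definition alpha_level :: "(real \<Rightarrow> real) \<Rightarrow> real \<Rightarrow> real set" where
  "alpha_level A \<alpha> = (if \<alpha> = 0 then closure {x. A x > 0} else {x. A x \<ge> \<alpha>})"

definition fuzzy_Fc :: "(real \<Rightarrow> real) \<Rightarrow> bool" where
  "fuzzy_Fc A \<longleftrightarrow> (\<forall>x. 0 \<le> A x \<and> A x \<le> 1) \<and>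
     (\<forall>\<alpha>\<in>{0..1}. \<exists>a b. a \<le> b \<and> alpha_level A \<alpha> = {a..b})"

definition supp_fun :: "(real \<Rightarrow> real) \<Rightarrow> real \<Rightarrow> real \<Rightarrow> real" where
  "supp_fun A u \<alpha> = Sup ((\<lambda>v. u * v) ` alpha_level A \<alpha>)"

definition random_compact_set :: "'a measure \<Rightarrow> ('a \<Rightarrow> real set) \<Rightarrow> bool" where
  "random_compact_set M K \<longleftrightarrow> (\<forall>\<omega>\<in>space M. compact (K \<omega>) \<and> K \<omega> \<noteq> {}) \<and>
     (\<forall>C. compact C \<longrightarrow> {\<omega>\<in>space M. K \<omega> \<inter> C \<noteq> {}} \<in> sets M)"

definition fuzzy_rv :: "'a measure \<Rightarrow> ('a \<Rightarrow> real \<Rightarrow> real) \<Rightarrow> bool" where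
  "fuzzy_rv M X \<longleftrightarrow> (\<forall>\<omega>\<in>space M. fuzzy_Fc (X \<omega>)) \<and>
     (\<forall>\<alpha>\<in>{0..1}. random_compact_set M (\<lambda>\<omega>. alpha_level (X \<omega>) \<alpha>))"

definition norm0 :: "('a \<Rightarrow> real \<Rightarrow> real) \<Rightarrow> 'a \<Rightarrow> real" where
  "norm0 X \<omega> = Sup (abs ` alpha_level (X \<omega>) 0)"

text \<open>rho_1 metric, V uniform on {-1,1}.\<close>
definition rho1 :: "(real \<Rightarrow> real) \<Rightarrow> (real \<Rightarrow> real) \<Rightarrow> real" where
  "rho1 A B = (\<Sum>u\<in>{-1, 1::real}.
      (1/2) * integral {0..1} (\<lambda>\<alpha>. \<bar>supp_fun A u \<alpha> - supp_fun B u \<alpha>\<bar>))"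

text \<open>D_1(A;X) = (1 + E[rho_1(A,X)])^{-1}; the expectation of the nonnegative variable is
  the nonnegative integral, so the depth lives in ennreal (inverse of infinity is 0).\<close>
definition D1 :: "'a measure \<Rightarrow> ('a \<Rightarrow> real \<Rightarrow> real) \<Rightarrow> (real \<Rightarrow> real) \<Rightarrow> ennreal" where
  "D1 M X A = inverse (1 + (\<integral>\<^sup>+ \<omega>. ennreal (rho1 A (X \<omega>)) \<partial>M))"

definition D_FT :: "'a measure \<Rightarrow> ('a \<Rightarrow> real \<Rightarrow> real) \<Rightarrow> (real \<Rightarrow> real) \<Rightarrow> real" where
  "D_FT M X A = (INF p\<in>{-1, 1::real} \<times> {0..1::real}.
      min (measure M {\<omega>\<in>space M. supp_fun (X \<omega>) (fst p) (snd p) \<le> supp_fun A (fst p) (snd p)})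
          (measure M {\<omega>\<in>space M. supp_fun (X \<omega>) (fst p) (snd p) \<ge> supp_fun A (fst p) (snd p)}))"

definition Med :: "((real \<Rightarrow> real) \<Rightarrow> 'b::order) \<Rightarrow> (real \<Rightarrow> real) set" where
  "Med D = {A. fuzzy_Fc A \<and> (\<forall>U. fuzzy_Fc U \<longrightarrow> D U \<le> D A)}"

end

theory Submission
  imports Defs
begin


definition lo :: "(real \<Rightarrow> real) \<Rightarrow> real \<Rightarrow> real" where
  "lo A a = Inf (alpha_level A a)"
definition hi :: "(real \<Rightarrow> real) \<Rightarrow> real \<Rightarrow> real" where
  "hi A a = Sup (alpha_level A a)"

lemma Fc_lev:
  assumes "fuzzy_Fc A" "a \<in> {0..1}"
  shows "alpha_level A a = {lo A a..hi A a} \<and> lo A a \<le> hi A a"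
proof -
  obtain l h where "l \<le> h" "alpha_level A a = {l..h}"
    using assms unfolding fuzzy_Fc_def by blast
  then show ?thesis by (simp add: lo_def hi_def)
qed

lemma Fc_range: "fuzzy_Fc A \<Longrightarrow> 0 \<le> A x \<and> A x \<le> 1"
  unfolding fuzzy_Fc_def by blast

lemma Fc_mono:
  assumes "fuzzy_Fc A" "0 \<le> a" "a \<le> b" "b \<le> 1"
  shows "alpha_level A b \<subseteq> alpha_level A a"
proof (cases "a = 0")
  case True
  show ?thesis
  proof (cases "b = 0")
    case True with \<open>a = 0\<close> show ?thesis by simp
  next
    case False
    then have "alpha_level A b = {x. A x \<ge> b}" by (simp add: alpha_level_def)
    also have "\<dots> \<subseteq> {x. A x > 0}" using False assms by auto
    also have "\<dots> \<subseteq> closure {x. A x > 0}" by (rule closure_subset)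
    finally show ?thesis using True by (simp add: alpha_level_def)
  qed
next
  case False
  then show ?thesis using assms by (auto simp: alpha_level_def)
qed

lemma Fc_lo_hi_mono:
  assumes "fuzzy_Fc A" "0 \<le> a" "a \<le> b" "b \<le> 1"
  shows "lo A a \<le> lo A b" "hi A b \<le> hi A a"
proof -
  have "alpha_level A b \<subseteq> alpha_level A a" using Fc_mono assms by blast
  moreover have "alpha_level A a = {lo A a..hi A a}" "alpha_level A b = {lo A b..hi A b}"
    "lo A b \<le> hi A b" using Fc_lev assms by auto
  ultimately show "lo A a \<le> lo A b" "hi A b \<le> hi A a" by auto
qed

lemma Fc_LC:
  assumes "fuzzy_Fc A" "g \<in> {0<..1}" "\<And>b. b \<in> {0<..<g} \<Longrightarrow> x \<in> alpha_level A b"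
  shows "x \<in> alpha_level A g"
proof -
  have "g \<le> A x"
  proof (rule dense_le_bounded[of 0 g])
    show "0 < g" using assms by auto
    fix w assume "0 < w" "w < g"
    then have "x \<in> alpha_level A w" using assms by auto
    then show "w \<le> A x" using \<open>0 < w\<close> by (simp add: alpha_level_def)
  qed
  then show ?thesis using assms by (simp add: alpha_level_def)
qed

lemma Fc_RC0:
  assumes "fuzzy_Fc A"
  shows "alpha_level A 0 = closure (\<Union>b\<in>{0<..1}. alpha_level A b)"
proof -
  have "{x. A x > 0} = (\<Union>b\<in>{0<..1}. alpha_level A b)"
  proof (intro equalityI subsetI)
    fix x assume "x \<in> {x. A x > 0}"
    then have "A x \<in> {0<..1}" "x \<in> alpha_level A (A x)" using Fc_range[OF assms, of x]
      by (auto simp: alpha_level_def)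
    then show "x \<in> (\<Union>b\<in>{0<..1}. alpha_level A b)" by blast
  qed (auto simp: alpha_level_def)
  then show ?thesis by (simp add: alpha_level_def)
qed

definition adm :: "(real \<Rightarrow> real) \<Rightarrow> bool" where
 "adm f \<longleftrightarrow> (\<forall>a b. 0 \<le> a \<longrightarrow> a \<le> b \<longrightarrow> b \<le> 1 \<longrightarrow> f b \<le> f a) \<and>
   (\<forall>g\<in>{0<..1}. \<forall>x. (\<forall>b\<in>{0<..<g}. x \<le> f b) \<longrightarrow> x \<le> f g) \<and>
   (\<forall>x. (\<forall>b\<in>{0<..1}. f b \<le> x) \<longrightarrow> f 0 \<le> x)"

lemma supp_fun_Fc:
  assumes "fuzzy_Fc A" "a \<in> {0..1}"
  shows "supp_fun A 1 a = hi A a" "supp_fun A (-1) a = - lo A a"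
proof -
  have e: "alpha_level A a = {lo A a..hi A a}" and le: "lo A a \<le> hi A a" using Fc_lev assms by auto
  show "supp_fun A 1 a = hi A a" using le by (simp add: supp_fun_def e)
  have "(\<lambda>v. -1 * v) ` {lo A a..hi A a} = {- hi A a..- lo A a}" by simp
  then show "supp_fun A (-1) a = - lo A a" using le by (simp add: supp_fun_def e)
qed

lemma adm_hi:
  assumes "fuzzy_Fc A"
  shows "adm (supp_fun A 1)"
  unfolding adm_def
proof (intro conjI allI impI ballI)
  fix a b :: real assume "0 \<le> a" "a \<le> b" "b \<le> 1"
  then show "supp_fun A 1 b \<le> supp_fun A 1 a"
    using Fc_lo_hi_mono[OF assms] supp_fun_Fc[OF assms] by auto
next
  fix g x assume g: "g \<in> {0<..1}" and H: "\<forall>b\<in>{0<..<g}. x \<le> supp_fun A 1 b"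
  define y where "y = max x (lo A g)"
  have "y \<in> alpha_level A g"
  proof (rule Fc_LC[OF assms g])
    fix b assume b: "b \<in> {0<..<g}"
    have "lo A b \<le> lo A g" "hi A g \<le> hi A b" using Fc_lo_hi_mono[OF assms, of b g] b g by auto
    moreover have "x \<le> supp_fun A 1 b" using H b by auto
    then have "x \<le> hi A b" using b g supp_fun_Fc[OF assms, of b] by auto
    moreover have "lo A g \<le> hi A g" using Fc_lev[OF assms, of g] g by auto
    ultimately show "y \<in> alpha_level A b" using Fc_lev[OF assms, of b] b g by (auto simp: y_def)
  qed
  then have "y \<le> hi A g" using Fc_lev[OF assms, of g] g by auto
  then show "x \<le> supp_fun A 1 g" using g supp_fun_Fc[OF assms, of g] by (auto simp: y_def)
next
  fix x assume H: "\<forall>b\<in>{0<..1}. supp_fun A 1 b \<le> x"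
  have "(\<Union>b\<in>{0<..1}. alpha_level A b) \<subseteq> {..x}"
  proof (intro subsetI)
    fix y assume "y \<in> (\<Union>b\<in>{0<..1}. alpha_level A b)"
    then obtain b where b: "b \<in> {0<..1}" "y \<in> alpha_level A b" by blast
    have "supp_fun A 1 b \<le> x" using H b by blast
    then show "y \<in> {..x}" using b Fc_lev[OF assms, of b] supp_fun_Fc[OF assms, of b] by auto
  qed
  then have "alpha_level A 0 \<subseteq> {..x}" using Fc_RC0[OF assms]
    by (metis closed_atMost closure_minimal)
  moreover have "hi A 0 \<in> alpha_level A 0" using Fc_lev[OF assms, of 0] by auto
  ultimately show "supp_fun A 1 0 \<le> x" using supp_fun_Fc[OF assms, of 0] by auto
qed

lemma adm_lo:
  assumes "fuzzy_Fc A"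
  shows "adm (supp_fun A (-1))"
  unfolding adm_def
proof (intro conjI allI impI ballI)
  fix a b :: real assume "0 \<le> a" "a \<le> b" "b \<le> 1"
  then show "supp_fun A (-1) b \<le> supp_fun A (-1) a"
    using Fc_lo_hi_mono[OF assms] supp_fun_Fc[OF assms] by auto
next
  fix g x assume g: "g \<in> {0<..1}" and H: "\<forall>b\<in>{0<..<g}. x \<le> supp_fun A (-1) b"
  define y where "y = min (-x) (hi A g)"
  have "y \<in> alpha_level A g"
  proof (rule Fc_LC[OF assms g])
    fix b assume b: "b \<in> {0<..<g}"
    have "lo A b \<le> lo A g" "hi A g \<le> hi A b" using Fc_lo_hi_mono[OF assms, of b g] b g by auto
    moreover have "x \<le> supp_fun A (-1) b" using H b by auto
    then have "lo A b \<le> -x" using b g supp_fun_Fc[OF assms, of b] by auto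
    moreover have "lo A g \<le> hi A g" using Fc_lev[OF assms, of g] g by auto
    ultimately show "y \<in> alpha_level A b" using Fc_lev[OF assms, of b] b g by (auto simp: y_def)
  qed
  then have "lo A g \<le> y" using Fc_lev[OF assms, of g] g by auto
  then show "x \<le> supp_fun A (-1) g" using g supp_fun_Fc[OF assms, of g] by (auto simp: y_def)
next
  fix x assume H: "\<forall>b\<in>{0<..1}. supp_fun A (-1) b \<le> x"
  have "(\<Union>b\<in>{0<..1}. alpha_level A b) \<subseteq> {-x..}"
  proof (intro subsetI)
    fix y assume "y \<in> (\<Union>b\<in>{0<..1}. alpha_level A b)"
    then obtain b where b: "b \<in> {0<..1}" "y \<in> alpha_level A b" by blast
    have "supp_fun A (-1) b \<le> x" using H b by blast
    then show "y \<in> {-x..}" using b Fc_lev[OF assms, of b] supp_fun_Fc[OF assms, of b] by auto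
  qed
  then have "alpha_level A 0 \<subseteq> {-x..}" using Fc_RC0[OF assms]
    by (metis closed_atLeast closure_minimal)
  moreover have "lo A 0 \<in> alpha_level A 0" using Fc_lev[OF assms, of 0] by auto
  ultimately show "supp_fun A (-1) 0 \<le> x" using supp_fun_Fc[OF assms, of 0] by auto
qed

lemma adm_supp:
  assumes "fuzzy_Fc A" "u \<in> {-1, 1}"
  shows "adm (supp_fun A u)"
  using assms adm_hi adm_lo by auto

lemma supp_sum_nonneg:
  assumes "fuzzy_Fc A" "a \<in> {0..1}"
  shows "0 \<le> supp_fun A 1 a + supp_fun A (-1) a"
  using supp_fun_Fc[OF assms] Fc_lev[OF assms] by auto


lemma supp_interval:
  assumes "l \<le> (h::real)"
  shows "Sup ((\<lambda>v. 1 * v) ` {l..h}) = h" "Sup ((\<lambda>v. -1 * v) ` {l..h}) = -l"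
proof -
  show "Sup ((\<lambda>v. 1 * v) ` {l..h}) = h" using assms by simp
  have "(\<lambda>v. -1 * v) ` {l..h} = {-h..-l}" by simp
  then show "Sup ((\<lambda>v. -1 * v) ` {l..h}) = -l" using assms by simp
qed

lemma adm_D:
  assumes "adm f"
  shows "\<And>a b. 0 \<le> a \<Longrightarrow> a \<le> b \<Longrightarrow> b \<le> 1 \<Longrightarrow> f b \<le> f a"
    and "\<And>g x. g \<in> {0<..1} \<Longrightarrow> (\<And>b. b \<in> {0<..<g} \<Longrightarrow> x \<le> f b) \<Longrightarrow> x \<le> f g"
    and "\<And>x. (\<And>b. b \<in> {0<..1} \<Longrightarrow> f b \<le> x) \<Longrightarrow> f 0 \<le> x"
  using assms unfolding adm_def by blast+

lemma construct:
  assumes f: "adm f" and g: "adm g" and fg: "\<forall>a\<in>{0..1}. 0 \<le> f a + g a"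
  shows "\<exists>A. fuzzy_Fc A \<and> (\<forall>a\<in>{0..1}. supp_fun A 1 a = f a \<and> supp_fun A (-1) a = g a)"
proof -
  define S where "S x = {b\<in>{0..1}. - g b \<le> x \<and> x \<le> f b}" for x
  define A where "A x = (if S x = {} then 0 else Sup (S x))" for x
  have down: "b' \<in> S x" if "b \<in> S x" "0 \<le> b'" "b' \<le> b" for b b' x
  proof -
    have "f b \<le> f b'" "g b \<le> g b'" using that adm_D(1)[OF f] adm_D(1)[OF g] by (auto simp: S_def)
    then show ?thesis using that by (auto simp: S_def)
  qed
  have bdd: "bdd_above (S x)" for x by (rule bdd_aboveI[of _ 1]) (auto simp: S_def)
  have rng: "0 \<le> A x \<and> A x \<le> 1" for x
  proof (cases "S x = {}")
    case False
    then obtain b where "b \<in> S x" by blast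
    then have "b \<le> Sup (S x)" "0 \<le> b" using cSup_upper[OF _ bdd] by (auto simp: S_def)
    moreover have "Sup (S x) \<le> 1" using False by (intro cSup_least) (auto simp: S_def)
    ultimately show ?thesis using False by (simp add: A_def)
  qed (simp add: A_def)
  have K: "a \<le> A x \<longleftrightarrow> - g a \<le> x \<and> x \<le> f a" if a: "0 < a" "a \<le> 1" for a x
  proof
    assume "- g a \<le> x \<and> x \<le> f a"
    then have "a \<in> S x" using a by (auto simp: S_def)
    then show "a \<le> A x" using cSup_upper[OF _ bdd] by (auto simp: A_def)
  next
    assume ax: "a \<le> A x"
    then have ne: "S x \<noteq> {}" using a by (auto simp: A_def)
    have Sb: "b \<in> S x" if b: "b \<in> {0<..<a}" for b
    proof -
      have "b < Sup (S x)" using b ax ne by (simp add: A_def)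
      then obtain c where "c \<in> S x" "b < c" using less_cSupD[OF ne] by blast
      then show ?thesis using down b by auto
    qed
    have "x \<le> f a" using adm_D(2)[OF f, of a x] Sb a by (auto simp: S_def)
    moreover have "-x \<le> g a" using adm_D(2)[OF g, of a "-x"] Sb a by (force simp: S_def)
    ultimately show "- g a \<le> x \<and> x \<le> f a" by auto
  qed
  have lev: "alpha_level A a = {- g a..f a}" if a: "0 < a" "a \<le> 1" for a
  proof -
    have "alpha_level A a = {x. a \<le> A x}" using a by (simp add: alpha_level_def)
    also have "\<dots> = {- g a..f a}" using K[OF a] by (simp add: atLeastAtMost_def atLeast_def atMost_def Collect_conj_eq)
    finally show ?thesis .
  qed
  have pos: "{x. A x > 0} = (\<Union>b\<in>{0<..1}. {- g b..f b})"
  proof (intro equalityI subsetI)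
    fix x assume "x \<in> {x. A x > 0}"
    then have ax: "A x \<in> {0<..1}" using rng[of x] by auto
    then have "- g (A x) \<le> x \<and> x \<le> f (A x)" using K[of "A x" x] by simp
    then show "x \<in> (\<Union>b\<in>{0<..1}. {- g b..f b})" by (intro UN_I[OF ax]) simp
  next
    fix x assume "x \<in> (\<Union>b\<in>{0<..1}. {- g b..f b})"
    then obtain b where b: "b \<in> {0<..1}" "- g b \<le> x" "x \<le> f b" by auto
    then have "b \<le> A x" using K[of b x] by simp
    then show "x \<in> {x. A x > 0}" using b by simp
  qed
  have lev0: "alpha_level A 0 = {- g 0..f 0}"
  proof -
    have "closure (\<Union>b\<in>{0<..1}. {- g b..f b}) = {- g 0..f 0}"
    proof (intro equalityI)
      have "(\<Union>b\<in>{0<..1}. {- g b..f b}) \<subseteq> {- g 0..f 0}"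
      proof (intro subsetI)
        fix x assume "x \<in> (\<Union>b\<in>{0<..1}. {- g b..f b})"
        then obtain b where b: "b \<in> {0<..1}" "- g b \<le> x" "x \<le> f b" by auto
        have "f b \<le> f 0" "g b \<le> g 0" using adm_D(1)[OF f, of 0 b] adm_D(1)[OF g, of 0 b] b by auto
        then show "x \<in> {- g 0..f 0}" using b by auto
      qed
      then show "closure (\<Union>b\<in>{0<..1}. {- g b..f b}) \<subseteq> {- g 0..f 0}"
        by (metis closed_atLeastAtMost closure_minimal)
    next
      show "{- g 0..f 0} \<subseteq> closure (\<Union>b\<in>{0<..1}. {- g b..f b})"
      proof (intro subsetI)
        fix x assume x: "x \<in> {- g 0..f 0}"
        show "x \<in> closure (\<Union>b\<in>{0<..1}. {- g b..f b})"
          unfolding closure_approachable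
        proof (intro allI impI)
          fix e :: real assume e: "0 < e"
          obtain b1 where b1: "b1 \<in> {0<..1}" "f 0 - e < f b1"
          proof -
            have "\<not> (\<forall>b\<in>{0<..1}. f b \<le> f 0 - e)"
            proof
              assume H: "\<forall>b\<in>{0<..1}. f b \<le> f 0 - e"
              have "f 0 \<le> f 0 - e" by (rule adm_D(3)[OF f]) (use H in blast)
              then show False using e by simp
            qed
            then show ?thesis using that by (meson not_le)
          qed
          obtain b2 where b2: "b2 \<in> {0<..1}" "g 0 - e < g b2"
          proof -
            have "\<not> (\<forall>b\<in>{0<..1}. g b \<le> g 0 - e)"
            proof
              assume H: "\<forall>b\<in>{0<..1}. g b \<le> g 0 - e"
              have "g 0 \<le> g 0 - e" by (rule adm_D(3)[OF g]) (use H in blast)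
              then show False using e by simp
            qed
            then show ?thesis using that by (meson not_le)
          qed
          define b where "b = min b1 b2"
          have b: "b \<in> {0<..1}" using b1 b2 by (auto simp: b_def)
          have "f b1 \<le> f b" "g b2 \<le> g b" using adm_D(1)[OF f, of b b1] adm_D(1)[OF g, of b b2] b b1 b2
            by (auto simp: b_def)
          moreover have "0 \<le> f b + g b" using fg b by auto
          define y where "y = max (- g b) (min x (f b))"
          have "y \<in> {- g b..f b}" using \<open>0 \<le> f b + g b\<close> by (auto simp: y_def)
          then have "y \<in> (\<Union>b\<in>{0<..1}. {- g b..f b})" by (intro UN_I[OF b])
          moreover have "dist y x < e" using x e b1 b2 calculation
            by (auto simp: y_def dist_real_def)
          ultimately show "\<exists>y\<in>\<Union>b\<in>{0<..1}. {- g b..f b}. dist y x < e" by blast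
        qed
      qed
    qed
    then show ?thesis using pos by (simp add: alpha_level_def)
  qed
  have levall: "alpha_level A a = {- g a..f a} \<and> - g a \<le> f a" if "a \<in> {0..1}" for a
    using that lev lev0 fg[rule_format, OF that] by (cases "a = 0") auto
  have "fuzzy_Fc A"
    unfolding fuzzy_Fc_def using rng levall by blast
  moreover have "\<forall>a\<in>{0..1}. supp_fun A 1 a = f a \<and> supp_fun A (-1) a = g a"
  proof
    fix a :: real assume a: "a \<in> {0..1}"
    then have "alpha_level A a = {- g a..f a}" "- g a \<le> f a" using levall by auto
    then show "supp_fun A 1 a = f a \<and> supp_fun A (-1) a = g a"
      using supp_interval[of "- g a" "f a"] by (simp add: supp_fun_def)
  qed
  ultimately show ?thesis by blast
qed


context prob_space
begin

definition ismed :: "('a \<Rightarrow> real) \<Rightarrow> real \<Rightarrow> bool" where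
  "ismed Z c \<longleftrightarrow> 1/2 \<le> prob {\<omega>\<in>space M. Z \<omega> \<le> c} \<and> 1/2 \<le> prob {\<omega>\<in>space M. c \<le> Z \<omega>}"

definition hdep :: "('a \<Rightarrow> real) \<Rightarrow> real \<Rightarrow> real" where
  "hdep Z c = min (prob {\<omega>\<in>space M. Z \<omega> \<le> c}) (prob {\<omega>\<in>space M. c \<le> Z \<omega>})"

lemma dec_ge:
  assumes "range A \<subseteq> events" "decseq A" "\<And>n. c \<le> prob (A n)"
  shows "c \<le> prob (\<Inter>n. A n)"
proof -
  have "(\<lambda>n. prob (A n)) \<longlonglongrightarrow> prob (\<Inter>n. A n)"
    using assms by (intro Lim_measure_decseq) auto
  then show ?thesis using assms(3) by (intro LIMSEQ_le_const) auto
qed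

lemma inc_le:
  assumes "range A \<subseteq> events" "incseq A" "\<And>n. prob (A n) \<le> c"
  shows "prob (\<Union>n. A n) \<le> c"
proof -
  have "(\<lambda>n. prob (A n)) \<longlonglongrightarrow> prob (\<Union>n. A n)"
    using assms by (intro Lim_measure_incseq) auto
  then show ?thesis using assms(3) by (intro LIMSEQ_le_const2) auto
qed

lemma P_ge_lim:
  fixes Z :: "'a \<Rightarrow> real"
  assumes Z: "Z \<in> borel_measurable M" and H: "\<And>t. t < m \<Longrightarrow> c \<le> prob {\<omega>\<in>space M. t \<le> Z \<omega>}"
  shows "c \<le> prob {\<omega>\<in>space M. m \<le> Z \<omega>}"
proof -
  define A where "A n = {\<omega>\<in>space M. m - 1 / real (Suc n) \<le> Z \<omega>}" for n
  have "(\<Inter>n. A n) = {\<omega>\<in>space M. m \<le> Z \<omega>}"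
  proof (intro equalityI subsetI)
    fix \<omega> assume "\<omega> \<in> (\<Inter>n. A n)"
    then have sp: "\<omega> \<in> space M" and h: "\<And>n. m - 1 / real (Suc n) \<le> Z \<omega>" by (auto simp: A_def)
    have "m \<le> Z \<omega>"
    proof (rule ccontr)
      assume "\<not> m \<le> Z \<omega>"
      then have "0 < m - Z \<omega>" by simp
      then obtain n where "1 / real (Suc n) < m - Z \<omega>" using nat_approx_posE by blast
      then show False using h[of n] by simp
    qed
    then show "\<omega> \<in> {\<omega>\<in>space M. m \<le> Z \<omega>}" using sp by simp
  next
    fix \<omega> assume "\<omega> \<in> {\<omega>\<in>space M. m \<le> Z \<omega>}"
    then show "\<omega> \<in> (\<Inter>n. A n)" by (auto simp: A_def intro: order_trans[of _ m])
  qed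
  moreover have "c \<le> prob (\<Inter>n. A n)"
  proof (rule dec_ge)
    show "range A \<subseteq> events" using Z unfolding A_def by auto
    show "decseq A" unfolding decseq_def A_def
    proof (intro allI impI subsetI)
      fix i j :: nat and \<omega> assume ij: "i \<le> j" and "\<omega> \<in> {\<omega>\<in>space M. m - 1 / real (Suc j) \<le> Z \<omega>}"
      moreover have "1 / real (Suc j) \<le> 1 / real (Suc i)" using ij by (simp add: frac_le)
      ultimately show "\<omega> \<in> {\<omega>\<in>space M. m - 1 / real (Suc i) \<le> Z \<omega>}" by auto
    qed
    show "c \<le> prob (A n)" for n unfolding A_def by (rule H) simp
  qed
  ultimately show ?thesis by simp
qed

lemma P_le_lim:
  fixes Z :: "'a \<Rightarrow> real"
  assumes Z: "Z \<in> borel_measurable M" and H: "\<And>t. m < t \<Longrightarrow> c \<le> prob {\<omega>\<in>space M. Z \<omega> \<le> t}"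
  shows "c \<le> prob {\<omega>\<in>space M. Z \<omega> \<le> m}"
proof -
  have Z': "(\<lambda>\<omega>. - Z \<omega>) \<in> borel_measurable M" using Z by simp
  have eq: "\<And>t. {\<omega>\<in>space M. -t \<le> - Z \<omega>} = {\<omega>\<in>space M. Z \<omega> \<le> t}" by auto
  have "c \<le> prob {\<omega>\<in>space M. -m \<le> - Z \<omega>}"
  proof (rule P_ge_lim[OF Z'])
    fix t assume "t < - m"
    then have "c \<le> prob {\<omega>\<in>space M. Z \<omega> \<le> -t}" by (intro H) simp
    then show "c \<le> prob {\<omega>\<in>space M. t \<le> - Z \<omega>}" using eq[of "-t"] by simp
  qed
  then show ?thesis using eq[of m] by simp
qed

lemma P_lt_lim:
  fixes Z :: "'a \<Rightarrow> real"
  assumes Z: "Z \<in> borel_measurable M" and H: "\<And>r. r < t \<Longrightarrow> prob {\<omega>\<in>space M. Z \<omega> \<le> r} \<le> c"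
  shows "prob {\<omega>\<in>space M. Z \<omega> < t} \<le> c"
proof -
  define A where "A n = {\<omega>\<in>space M. Z \<omega> \<le> t - 1 / real (Suc n)}" for n
  have "(\<Union>n. A n) = {\<omega>\<in>space M. Z \<omega> < t}"
  proof (intro equalityI subsetI)
    fix \<omega> assume "\<omega> \<in> (\<Union>n. A n)"
    then obtain n where A: "\<omega> \<in> space M" "Z \<omega> \<le> t - 1 / real (Suc n)" by (auto simp: A_def)
    have "0 < 1 / real (Suc n)" by simp
    then have "Z \<omega> < t" using A(2) by linarith
    then show "\<omega> \<in> {\<omega>\<in>space M. Z \<omega> < t}" using A(1) by simp
  next
    fix \<omega> assume "\<omega> \<in> {\<omega>\<in>space M. Z \<omega> < t}"
    then have sp: "\<omega> \<in> space M" and "0 < t - Z \<omega>" by auto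
    then obtain n where "1 / real (Suc n) < t - Z \<omega>" using nat_approx_posE by blast
    then have "\<omega> \<in> A n" using sp by (auto simp: A_def)
    then show "\<omega> \<in> (\<Union>n. A n)" by blast
  qed
  moreover have "prob (\<Union>n. A n) \<le> c"
  proof (rule inc_le)
    show "range A \<subseteq> events" using Z unfolding A_def by auto
    show "incseq A" unfolding incseq_def A_def
    proof (intro allI impI subsetI)
      fix i j :: nat and \<omega> assume ij: "i \<le> j" and "\<omega> \<in> {\<omega>\<in>space M. Z \<omega> \<le> t - 1 / real (Suc i)}"
      moreover have "1 / real (Suc j) \<le> 1 / real (Suc i)" using ij by (simp add: frac_le)
      ultimately show "\<omega> \<in> {\<omega>\<in>space M. Z \<omega> \<le> t - 1 / real (Suc j)}" by auto
    qed
    show "prob (A n) \<le> c" for n unfolding A_def by (rule H) simp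
  qed
  ultimately show ?thesis by simp
qed

lemma prob_compl_le:
  fixes Z :: "'a \<Rightarrow> real"
  assumes Z: "Z \<in> borel_measurable M"
  shows "prob {\<omega>\<in>space M. Z \<omega> < t} = 1 - prob {\<omega>\<in>space M. t \<le> Z \<omega>}"
proof -
  have "{\<omega>\<in>space M. Z \<omega> < t} = space M - {\<omega>\<in>space M. t \<le> Z \<omega>}" by auto
  moreover have "{\<omega>\<in>space M. t \<le> Z \<omega>} \<in> events" using Z by auto
  ultimately show ?thesis using prob_compl by simp
qed

lemma prob_compl_le2:
  fixes Z :: "'a \<Rightarrow> real"
  assumes Z: "Z \<in> borel_measurable M"
  shows "prob {\<omega>\<in>space M. t < Z \<omega>} = 1 - prob {\<omega>\<in>space M. Z \<omega> \<le> t}"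
proof -
  have "{\<omega>\<in>space M. t < Z \<omega>} = space M - {\<omega>\<in>space M. Z \<omega> \<le> t}" by auto
  moreover have "{\<omega>\<in>space M. Z \<omega> \<le> t} \<in> events" using Z by auto
  ultimately show ?thesis using prob_compl by simp
qed

lemma ismed_neg:
  fixes Z :: "'a \<Rightarrow> real"
  shows "ismed (\<lambda>\<omega>. - Z \<omega>) (- c) \<longleftrightarrow> ismed Z c"
proof -
  have "{\<omega>\<in>space M. - Z \<omega> \<le> - c} = {\<omega>\<in>space M. c \<le> Z \<omega>}"
       "{\<omega>\<in>space M. - c \<le> - Z \<omega>} = {\<omega>\<in>space M. Z \<omega> \<le> c}" by auto
  then show ?thesis unfolding ismed_def by auto
qed

lemma E1:
  fixes Z :: "'a \<Rightarrow> real"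
  assumes Z: "integrable M Z" and mt: "m < t"
  shows "(t - m) * (2 * prob {\<omega>\<in>space M. Z \<omega> \<le> m} - 1)
          \<le> expectation (\<lambda>\<omega>. \<bar>Z \<omega> - t\<bar>) - expectation (\<lambda>\<omega>. \<bar>Z \<omega> - m\<bar>)"
proof -
  have Zm: "Z \<in> borel_measurable M" using Z by auto
  define S where "S = {\<omega>\<in>space M. Z \<omega> \<le> m}"
  have S: "S \<in> events" using Zm by (auto simp: S_def)
  have i1: "integrable M (\<lambda>\<omega>. \<bar>Z \<omega> - t\<bar>)" "integrable M (\<lambda>\<omega>. \<bar>Z \<omega> - m\<bar>)"
    using Z by auto
  have iS: "integrable M (indicator S :: 'a \<Rightarrow> real)"
    using S by (intro integrable_real_indicator) (auto simp: emeasure_eq_measure)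
  have i3: "integrable M (\<lambda>\<omega>. 2 * indicator S \<omega> - (1::real))"
    using Bochner_Integration.integrable_diff[OF integrable_mult_right[OF iS, of 2] integrable_const[of 1]] by simp
  have i2: "integrable M (\<lambda>\<omega>. (t - m) * (2 * indicator S \<omega> - 1))"
    using i3 by (intro integrable_mult_right)
  have e1: "expectation (\<lambda>\<omega>. 2 * indicator S \<omega> - (1::real)) = 2 * prob S - 1"
    using iS S by (simp add: integral_diff prob_space)
  have e2: "expectation (\<lambda>\<omega>. (t - m) * (2 * indicator S \<omega> - 1)) = (t - m) * (2 * prob S - 1)"
    by (simp only: integral_mult_right_zero e1)
  note e2
  moreover have "expectation (\<lambda>\<omega>. (t - m) * (2 * indicator S \<omega> - 1))
      \<le> expectation (\<lambda>\<omega>. \<bar>Z \<omega> - t\<bar> - \<bar>Z \<omega> - m\<bar>)"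
  proof (rule integral_mono[OF i2])
    show "integrable M (\<lambda>\<omega>. \<bar>Z \<omega> - t\<bar> - \<bar>Z \<omega> - m\<bar>)" using i1 by auto
    fix \<omega> assume "\<omega> \<in> space M"
    then show "(t - m) * (2 * indicator S \<omega> - 1) \<le> \<bar>Z \<omega> - t\<bar> - \<bar>Z \<omega> - m\<bar>"
      using mt by (cases "Z \<omega> \<le> m") (auto simp: S_def indicator_def abs_if)
  qed
  moreover have "expectation (\<lambda>\<omega>. \<bar>Z \<omega> - t\<bar> - \<bar>Z \<omega> - m\<bar>) =
      expectation (\<lambda>\<omega>. \<bar>Z \<omega> - t\<bar>) - expectation (\<lambda>\<omega>. \<bar>Z \<omega> - m\<bar>)"
    using i1 by (rule Bochner_Integration.integral_diff)
  ultimately have "(t - m) * (2 * prob S - 1) \<le> 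
      expectation (\<lambda>\<omega>. \<bar>Z \<omega> - t\<bar>) - expectation (\<lambda>\<omega>. \<bar>Z \<omega> - m\<bar>)" by linarith
  then show ?thesis by (simp only: S_def)
qed

lemma M1_gt:
  fixes Z :: "'a \<Rightarrow> real"
  assumes Z: "integrable M Z" and med: "ismed Z m" and mt: "m < t"
  shows "expectation (\<lambda>\<omega>. \<bar>Z \<omega> - m\<bar>) \<le> expectation (\<lambda>\<omega>. \<bar>Z \<omega> - t\<bar>)"
proof -
  have "0 \<le> (t - m) * (2 * prob {\<omega>\<in>space M. Z \<omega> \<le> m} - 1)"
    using med mt by (auto simp: ismed_def)
  then show ?thesis using E1[OF Z mt] by simp
qed

lemma abs_neg_eq: "(\<lambda>\<omega>. \<bar>- Z \<omega> - - t\<bar>) = (\<lambda>\<omega>. \<bar>Z \<omega> - t\<bar>)" for t :: real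
  by (auto simp: abs_if)

lemma M1:
  fixes Z :: "'a \<Rightarrow> real"
  assumes Z: "integrable M Z" and med: "ismed Z m"
  shows "expectation (\<lambda>\<omega>. \<bar>Z \<omega> - m\<bar>) \<le> expectation (\<lambda>\<omega>. \<bar>Z \<omega> - t\<bar>)"
proof (cases "m < t")
  case True then show ?thesis using M1_gt[OF Z med] by blast
next
  case False
  show ?thesis
  proof (cases "m = t")
    case False
    with \<open>\<not> m < t\<close> have "- m < - t" by simp
    moreover have "ismed (\<lambda>\<omega>. - Z \<omega>) (- m)" using med ismed_neg by blast
    moreover have "integrable M (\<lambda>\<omega>. - Z \<omega>)" using Z by auto
    ultimately have "expectation (\<lambda>\<omega>. \<bar>- Z \<omega> - - m\<bar>) \<le> expectation (\<lambda>\<omega>. \<bar>- Z \<omega> - - t\<bar>)"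
      using M1_gt[of "\<lambda>\<omega>. - Z \<omega>" "- m" "- t"] by blast
    then show ?thesis unfolding abs_neg_eq .
  qed simp
qed

lemma M2_gt:
  fixes Z :: "'a \<Rightarrow> real"
  assumes Z: "integrable M Z" and med: "ismed Z m" and mt: "m < t"
    and le: "expectation (\<lambda>\<omega>. \<bar>Z \<omega> - t\<bar>) \<le> expectation (\<lambda>\<omega>. \<bar>Z \<omega> - m\<bar>)"
  shows "ismed Z t"
proof -
  have Zm: "Z \<in> borel_measurable M" using Z by auto
  have "prob {\<omega>\<in>space M. Z \<omega> \<le> m} \<le> prob {\<omega>\<in>space M. Z \<omega> \<le> t}"
    using mt Zm by (intro finite_measure_mono) auto
  then have p1: "1/2 \<le> prob {\<omega>\<in>space M. Z \<omega> \<le> t}" using med by (auto simp: ismed_def)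
  have "1/2 \<le> prob {\<omega>\<in>space M. t \<le> Z \<omega>}"
  proof (rule ccontr)
    assume "\<not> 1/2 \<le> prob {\<omega>\<in>space M. t \<le> Z \<omega>}"
    then have "1/2 < prob {\<omega>\<in>space M. Z \<omega> < t}" using prob_compl_le[OF Zm, of t] by simp
    then obtain r where r: "r < t" "1/2 < prob {\<omega>\<in>space M. Z \<omega> \<le> r}"
      using P_lt_lim[OF Zm, of t "1/2"] by force
    define r' where "r' = max r m"
    have "prob {\<omega>\<in>space M. Z \<omega> \<le> r} \<le> prob {\<omega>\<in>space M. Z \<omega> \<le> r'}"
      using Zm by (intro finite_measure_mono) (auto simp: r'_def)
    then have pr: "1/2 < prob {\<omega>\<in>space M. Z \<omega> \<le> r'}" using r by simp
    have rt: "r' < t" using r mt by (simp add: r'_def)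
    have "0 < (t - r') * (2 * prob {\<omega>\<in>space M. Z \<omega> \<le> r'} - 1)"
      using pr rt by (intro mult_pos_pos) auto
    then have "expectation (\<lambda>\<omega>. \<bar>Z \<omega> - r'\<bar>) < expectation (\<lambda>\<omega>. \<bar>Z \<omega> - t\<bar>)"
      using E1[OF Z rt] by simp
    moreover have "expectation (\<lambda>\<omega>. \<bar>Z \<omega> - m\<bar>) \<le> expectation (\<lambda>\<omega>. \<bar>Z \<omega> - r'\<bar>)"
      by (rule M1[OF Z med])
    ultimately show False using le by simp
  qed
  then show ?thesis using p1 by (simp add: ismed_def)
qed

lemma M2:
  fixes Z :: "'a \<Rightarrow> real"
  assumes Z: "integrable M Z" and med: "ismed Z m"
    and le: "expectation (\<lambda>\<omega>. \<bar>Z \<omega> - t\<bar>) \<le> expectation (\<lambda>\<omega>. \<bar>Z \<omega> - m\<bar>)"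
  shows "ismed Z t"
proof (cases "m < t")
  case True then show ?thesis using M2_gt[OF Z med True le] by blast
next
  case False
  show ?thesis
  proof (cases "m = t")
    case False
    with \<open>\<not> m < t\<close> have "- m < - t" by simp
    moreover have "ismed (\<lambda>\<omega>. - Z \<omega>) (- m)" using med ismed_neg by blast
    moreover have "integrable M (\<lambda>\<omega>. - Z \<omega>)" using Z by auto
    ultimately have "ismed (\<lambda>\<omega>. - Z \<omega>) (- t)"
      using M2_gt[of "\<lambda>\<omega>. - Z \<omega>" "- m" "- t"] le unfolding abs_neg_eq by blast
    then show ?thesis using ismed_neg by blast
  qed (use med in simp)
qed

lemma H3: "ismed (Z::'a\<Rightarrow>real) m \<Longrightarrow> 1/2 \<le> hdep Z m"
  by (simp add: ismed_def hdep_def)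

lemma H2:
  fixes Z :: "'a \<Rightarrow> real"
  assumes Z: "Z \<in> borel_measurable M" and nm: "\<not> ismed Z t"
  shows "hdep Z t < 1/2"
  using nm by (auto simp: ismed_def hdep_def)

lemma H1:
  fixes Z :: "'a \<Rightarrow> real"
  assumes Z: "Z \<in> borel_measurable M" and med: "ismed Z m"
  shows "hdep Z t \<le> hdep Z m"
proof (cases "ismed Z t")
  case False
  then show ?thesis using H2[OF Z False] H3[OF med] by simp
next
  case True
  show ?thesis
  proof (cases "t < m")
    case tm: True
    have "prob ({\<omega>\<in>space M. Z \<omega> \<le> t} \<union> {\<omega>\<in>space M. m \<le> Z \<omega>}) =
          prob {\<omega>\<in>space M. Z \<omega> \<le> t} + prob {\<omega>\<in>space M. m \<le> Z \<omega>}"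
      using Z tm by (intro finite_measure_Union) auto
    moreover have "prob ({\<omega>\<in>space M. Z \<omega> \<le> t} \<union> {\<omega>\<in>space M. m \<le> Z \<omega>}) \<le> 1" by simp
    ultimately have "prob {\<omega>\<in>space M. Z \<omega> \<le> t} \<le> 1/2" using med by (simp add: ismed_def)
    then have "hdep Z t \<le> 1/2" unfolding hdep_def by linarith
    then show ?thesis using H3[OF med] by linarith
  next
    case False
    show ?thesis
    proof (cases "t = m")
      case False
      with \<open>\<not> t < m\<close> have tm: "m < t" by simp
      have "prob ({\<omega>\<in>space M. Z \<omega> \<le> m} \<union> {\<omega>\<in>space M. t \<le> Z \<omega>}) =
            prob {\<omega>\<in>space M. Z \<omega> \<le> m} + prob {\<omega>\<in>space M. t \<le> Z \<omega>}"
        using Z tm by (intro finite_measure_Union) auto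
      moreover have "prob ({\<omega>\<in>space M. Z \<omega> \<le> m} \<union> {\<omega>\<in>space M. t \<le> Z \<omega>}) \<le> 1" by simp
      ultimately have "prob {\<omega>\<in>space M. t \<le> Z \<omega>} \<le> 1/2" using med by (simp add: ismed_def)
      then have "hdep Z t \<le> 1/2" unfolding hdep_def by linarith
      then show ?thesis using H3[OF med] by linarith
    qed simp
  qed
qed

end


lemma sup_abs:
  assumes "l \<le> (h::real)"
  shows "Sup (abs ` {l..h}) = max h (-l)"
proof (rule cSup_eq_maximum)
  show "max h (-l) \<in> abs ` {l..h}"
  proof (cases "-l \<le> h")
    case True
    then have "max h (-l) = \<bar>h\<bar>" using assms by auto
    then show ?thesis using assms by auto
  next
    case False
    then have "max h (-l) = \<bar>l\<bar>" using assms by auto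
    then show ?thesis using assms by auto
  qed
next
  fix x assume "x \<in> abs ` {l..h}"
  then show "x \<le> max h (-l)" by auto
qed

locale fz = prob_space M for M :: "'a measure" +
  fixes X :: "'a \<Rightarrow> real \<Rightarrow> real"
  assumes frv: "fuzzy_rv M X"
    and fin: "(\<integral>\<^sup>+ \<omega>. ennreal (norm0 X \<omega>) \<partial>M) < \<infinity>"
begin

definition Y :: "real \<Rightarrow> real \<Rightarrow> 'a \<Rightarrow> real" where
  "Y u a \<omega> = supp_fun (X \<omega>) u a"

lemma XFc: "\<omega> \<in> space M \<Longrightarrow> fuzzy_Fc (X \<omega>)"
  using frv by (simp add: fuzzy_rv_def)

lemma rcs: "a \<in> {0..1} \<Longrightarrow> random_compact_set M (\<lambda>\<omega>. alpha_level (X \<omega>) a)"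
  using frv by (simp add: fuzzy_rv_def)

lemma Y_meas:
  assumes u: "u \<in> {-1, 1}" and a: "a \<in> {0..1}"
  shows "Y u a \<in> borel_measurable M"
proof -
  define K where "K \<omega> = alpha_level (X \<omega>) a" for \<omega>
  have Ks: "{\<omega>\<in>space M. K \<omega> \<inter> C \<noteq> {}} \<in> sets M" if "compact C" for C
    using rcs[OF a] that by (simp add: random_compact_set_def K_def)
  have Kint: "K \<omega> = {lo (X \<omega>) a..hi (X \<omega>) a} \<and> lo (X \<omega>) a \<le> hi (X \<omega>) a" if "\<omega> \<in> space M" for \<omega>
    using Fc_lev[OF XFc[OF that] a] by (simp add: K_def)
  show ?thesis
  proof (cases "u = 1")
    case True
    show ?thesis unfolding borel_measurable_iff_ge
    proof
      fix c
      have "{w \<in> space M. c \<le> Y u a w} = (\<Union>n::nat. {\<omega>\<in>space M. K \<omega> \<inter> {c..c + real n} \<noteq> {}})"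
      proof (intro equalityI subsetI)
        fix \<omega> assume "\<omega> \<in> {w \<in> space M. c \<le> Y u a w}"
        then have sp: "\<omega> \<in> space M" and c: "c \<le> hi (X \<omega>) a"
          using True supp_fun_Fc[OF XFc a] by (auto simp: Y_def)
        define y where "y = max c (lo (X \<omega>) a)"
        obtain n :: nat where n: "y - c \<le> real n" using real_arch_simple by blast
        have "y \<in> K \<omega> \<inter> {c..c + real n}" using Kint[OF sp] c n by (auto simp: y_def)
        then show "\<omega> \<in> (\<Union>n::nat. {\<omega>\<in>space M. K \<omega> \<inter> {c..c + real n} \<noteq> {}})" using sp by blast
      next
        fix \<omega> assume "\<omega> \<in> (\<Union>n::nat. {\<omega>\<in>space M. K \<omega> \<inter> {c..c + real n} \<noteq> {}})"
        then obtain n :: nat and y where sp: "\<omega> \<in> space M" and y: "y \<in> K \<omega>" "c \<le> y" by auto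
        then have "c \<le> hi (X \<omega>) a" using Kint[OF sp] by auto
        then show "\<omega> \<in> {w \<in> space M. c \<le> Y u a w}"
          using sp True supp_fun_Fc[OF XFc[OF sp] a] by (auto simp: Y_def)
      qed
      also have "\<dots> \<in> sets M" using Ks by (intro sets.countable_UN) auto
      finally show "{w \<in> space M. c \<le> Y u a w} \<in> sets M" .
    qed
  next
    case False
    then have u1: "u = -1" using u by auto
    show ?thesis unfolding borel_measurable_iff_ge
    proof
      fix c
      have "{w \<in> space M. c \<le> Y u a w} = (\<Union>n::nat. {\<omega>\<in>space M. K \<omega> \<inter> {- c - real n..- c} \<noteq> {}})"
      proof (intro equalityI subsetI)
        fix \<omega> assume "\<omega> \<in> {w \<in> space M. c \<le> Y u a w}"
        then have sp: "\<omega> \<in> space M" and c: "lo (X \<omega>) a \<le> - c"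
          using u1 supp_fun_Fc[OF XFc a] by (auto simp: Y_def)
        define y where "y = min (- c) (hi (X \<omega>) a)"
        obtain n :: nat where n: "- c - y \<le> real n" using real_arch_simple by blast
        have "y \<in> K \<omega> \<inter> {- c - real n..- c}" using Kint[OF sp] c n by (auto simp: y_def)
        then show "\<omega> \<in> (\<Union>n::nat. {\<omega>\<in>space M. K \<omega> \<inter> {- c - real n..- c} \<noteq> {}})" using sp by blast
      next
        fix \<omega> assume "\<omega> \<in> (\<Union>n::nat. {\<omega>\<in>space M. K \<omega> \<inter> {- c - real n..- c} \<noteq> {}})"
        then obtain n :: nat and y where sp: "\<omega> \<in> space M" and y: "y \<in> K \<omega>" "y \<le> - c" by auto
        then have "lo (X \<omega>) a \<le> - c" using Kint[OF sp] by auto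
        then show "\<omega> \<in> {w \<in> space M. c \<le> Y u a w}"
          using sp u1 supp_fun_Fc[OF XFc[OF sp] a] by (auto simp: Y_def)
      qed
      also have "\<dots> \<in> sets M" using Ks by (intro sets.countable_UN) auto
      finally show "{w \<in> space M. c \<le> Y u a w} \<in> sets M" .
    qed
  qed
qed

lemma Y_adm: "\<omega> \<in> space M \<Longrightarrow> u \<in> {-1, 1} \<Longrightarrow> adm (\<lambda>a. Y u a \<omega>)"
  using adm_supp[OF XFc] by (simp add: Y_def)

lemma Y_anti:
  "\<omega> \<in> space M \<Longrightarrow> u \<in> {-1, 1} \<Longrightarrow> 0 \<le> a \<Longrightarrow> a \<le> b \<Longrightarrow> b \<le> 1 \<Longrightarrow> Y u b \<omega> \<le> Y u a \<omega>"
  using adm_D(1)[OF Y_adm] by blast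

lemma Y_sum: "\<omega> \<in> space M \<Longrightarrow> a \<in> {0..1} \<Longrightarrow> 0 \<le> Y 1 a \<omega> + Y (-1) a \<omega>"
  using supp_sum_nonneg[OF XFc] by (simp add: Y_def)

lemma norm0_eq: "\<omega> \<in> space M \<Longrightarrow> norm0 X \<omega> = max (Y 1 0 \<omega>) (Y (-1) 0 \<omega>)"
  using Fc_lev[OF XFc, of \<omega> 0] supp_fun_Fc[OF XFc, of \<omega> 0] sup_abs
  by (simp add: norm0_def Y_def)

lemma norm0_meas: "norm0 X \<in> borel_measurable M"
proof -
  have "(\<lambda>\<omega>. max (Y 1 0 \<omega>) (Y (-1) 0 \<omega>)) \<in> borel_measurable M"
    using Y_meas[of 1 0] Y_meas[of "-1" 0] by (intro borel_measurable_max) auto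
  then show ?thesis by (rule measurable_cong[THEN iffD1, rotated]) (simp add: norm0_eq)
qed

lemma Y_bound:
  assumes sp: "\<omega> \<in> space M" and u: "u \<in> {-1, 1}" and a: "a \<in> {0..1}"
  shows "\<bar>Y u a \<omega>\<bar> \<le> norm0 X \<omega>"
proof -
  have "Y 1 a \<omega> \<le> Y 1 0 \<omega>" "Y (-1) a \<omega> \<le> Y (-1) 0 \<omega>" using Y_anti[OF sp] a by auto
  moreover have "0 \<le> Y 1 a \<omega> + Y (-1) a \<omega>" using Y_sum[OF sp a] .
  ultimately show ?thesis using u norm0_eq[OF sp] by auto
qed

lemma norm0_nonneg: "\<omega> \<in> space M \<Longrightarrow> 0 \<le> norm0 X \<omega>"
  using Y_bound[of \<omega> 1 0] by force

lemma norm0_int: "integrable M (norm0 X)"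
proof (rule integrableI_bounded[OF norm0_meas])
  have "(\<integral>\<^sup>+x. ennreal (norm (norm0 X x)) \<partial>M) = (\<integral>\<^sup>+ \<omega>. ennreal (norm0 X \<omega>) \<partial>M)"
    by (intro nn_integral_cong) (simp add: norm0_nonneg)
  then show "(\<integral>\<^sup>+x. ennreal (norm (norm0 X x)) \<partial>M) < \<infinity>" using fin by simp
qed

lemma Y_int: "u \<in> {-1, 1} \<Longrightarrow> a \<in> {0..1} \<Longrightarrow> integrable M (Y u a)"
  by (rule Bochner_Integration.integrable_bound[OF norm0_int Y_meas]) (auto intro!: AE_I2 simp: Y_bound norm0_nonneg)

lemma Yc_int: "u \<in> {-1, 1} \<Longrightarrow> a \<in> {0..1} \<Longrightarrow> integrable M (\<lambda>\<omega>. \<bar>Y u a \<omega> - c\<bar>)"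
  using Y_int by auto

lemma LC_prob:
  assumes u: "u \<in> {-1, 1}" and g: "g \<in> {0<..1}"
    and H: "\<And>b. b \<in> {0<..<g} \<Longrightarrow> p \<le> prob {\<omega>\<in>space M. c \<le> Y u b \<omega>}"
  shows "p \<le> prob {\<omega>\<in>space M. c \<le> Y u g \<omega>}"
proof -
  define bs where "bs n = g - g / real (n + 2)" for n :: nat
  have bs: "bs n \<in> {0<..<g}" for n
  proof -
    have "0 < g / real (n+2)" using g by simp
    moreover have "g * 1 < g * real (n + 2)" using g by (intro mult_strict_left_mono) auto
    then have "g / real (n + 2) < g" by (simp add: divide_less_eq)
    ultimately have "g / real (n + 2) < g" "0 < g / real (n+2)" by auto
    then show ?thesis by (auto simp: bs_def)
  qed
  have bs_mono: "bs i \<le> bs j" if "i \<le> j" for i j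
  proof -
    have "g / real (j + 2) \<le> g / real (i + 2)" using g that by (intro divide_left_mono) auto
    then show ?thesis by (simp add: bs_def)
  qed
  define A where "A n = {\<omega>\<in>space M. c \<le> Y u (bs n) \<omega>}" for n
  have "(\<Inter>n. A n) = {\<omega>\<in>space M. c \<le> Y u g \<omega>}"
  proof (intro equalityI subsetI)
    fix \<omega> assume "\<omega> \<in> (\<Inter>n. A n)"
    then have sp: "\<omega> \<in> space M" and h: "\<And>n. c \<le> Y u (bs n) \<omega>" by (auto simp: A_def)
    have "c \<le> Y u g \<omega>"
    proof (rule adm_D(2)[OF Y_adm[OF sp u] g])
      fix b assume b: "b \<in> {0<..<g}"
      then have "0 < g - b" by simp
      then obtain n where n: "g / real (n + 2) < g - b"
      proof -
        obtain n where "1 / real (Suc n) < (g - b) / g" using nat_approx_posE[of "(g - b) / g"] g \<open>0 < g - b\<close>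
          by auto
        then have "g / real (Suc n) < g - b" using g by (simp add: field_simps)
        moreover have "g / real (Suc n + 1) \<le> g / real (Suc n)" using g by (intro divide_left_mono) auto
        ultimately show ?thesis using that[of n] by simp
      qed
      then have "b \<le> bs n" by (simp add: bs_def)
      then have "Y u (bs n) \<omega> \<le> Y u b \<omega>" using Y_anti[OF sp u, of b "bs n"] b bs[of n] g by auto
      then show "c \<le> Y u b \<omega>" using h[of n] by simp
    qed
    then show "\<omega> \<in> {\<omega>\<in>space M. c \<le> Y u g \<omega>}" using sp by simp
  next
    fix \<omega> assume "\<omega> \<in> {\<omega>\<in>space M. c \<le> Y u g \<omega>}"
    then have sp: "\<omega> \<in> space M" and h: "c \<le> Y u g \<omega>" by auto
    have "Y u g \<omega> \<le> Y u (bs n) \<omega>" for n using Y_anti[OF sp u] bs[of n] g by auto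
    then show "\<omega> \<in> (\<Inter>n. A n)" using sp h by (auto simp: A_def intro: order_trans)
  qed
  moreover have "p \<le> prob (\<Inter>n. A n)"
  proof (rule dec_ge)
    have "Y u (bs n) \<in> borel_measurable M" for n using Y_meas[OF u] bs[of n] g by auto
    then show "range A \<subseteq> events" unfolding A_def by auto
    show "decseq A" unfolding decseq_def A_def
    proof (intro allI impI subsetI)
      fix i j :: nat and \<omega> assume ij: "i \<le> j" and "\<omega> \<in> {\<omega>\<in>space M. c \<le> Y u (bs j) \<omega>}"
      moreover have "Y u (bs j) \<omega> \<le> Y u (bs i) \<omega>" if "\<omega> \<in> space M"
        using Y_anti[OF that u] bs_mono[OF ij] bs[of i] bs[of j] g by auto
      ultimately show "\<omega> \<in> {\<omega>\<in>space M. c \<le> Y u (bs i) \<omega>}" by auto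
    qed
    show "p \<le> prob (A n)" for n unfolding A_def using H bs by blast
  qed
  ultimately show ?thesis by simp
qed

lemma RC0_prob:
  assumes u: "u \<in> {-1, 1}" and H: "\<And>b. b \<in> {0<..1} \<Longrightarrow> 1/2 \<le> prob {\<omega>\<in>space M. Y u b \<omega> \<le> c}"
  shows "1/2 \<le> prob {\<omega>\<in>space M. Y u 0 \<omega> \<le> c}"
proof -
  define bs where "bs n = 1 / real (Suc n)" for n :: nat
  have bs: "bs n \<in> {0<..1}" for n by (auto simp: bs_def)
  define A where "A n = {\<omega>\<in>space M. c < Y u (bs n) \<omega>}" for n
  have "(\<Union>n. A n) = {\<omega>\<in>space M. c < Y u 0 \<omega>}"
  proof (intro equalityI subsetI)
    fix \<omega> assume "\<omega> \<in> (\<Union>n. A n)"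
    then obtain n where sp: "\<omega> \<in> space M" and h: "c < Y u (bs n) \<omega>" by (auto simp: A_def)
    have "Y u (bs n) \<omega> \<le> Y u 0 \<omega>" using Y_anti[OF sp u] bs[of n] by auto
    then show "\<omega> \<in> {\<omega>\<in>space M. c < Y u 0 \<omega>}" using sp h by auto
  next
    fix \<omega> assume "\<omega> \<in> {\<omega>\<in>space M. c < Y u 0 \<omega>}"
    then have sp: "\<omega> \<in> space M" and h: "c < Y u 0 \<omega>" by auto
    have "\<not> (\<forall>b\<in>{0<..1}. Y u b \<omega> \<le> c)"
    proof
      assume "\<forall>b\<in>{0<..1}. Y u b \<omega> \<le> c"
      then have "Y u 0 \<omega> \<le> c" using adm_D(3)[OF Y_adm[OF sp u]] by blast
      then show False using h by simp
    qed
    then obtain b where b: "b \<in> {0<..1}" "c < Y u b \<omega>" by (auto simp: not_le)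
    obtain n where "1 / real (Suc n) < b" using nat_approx_posE[of b] b by auto
    then have "Y u b \<omega> \<le> Y u (bs n) \<omega>" using Y_anti[OF sp u] b by (auto simp: bs_def)
    then have "\<omega> \<in> A n" using sp b by (auto simp: A_def)
    then show "\<omega> \<in> (\<Union>n. A n)" by blast
  qed
  moreover have "prob (\<Union>n. A n) \<le> 1/2"
  proof (rule inc_le)
    show "range A \<subseteq> events" using Y_meas[OF u] bs unfolding A_def
      by (auto intro!: measurable_sets[of _ M borel] simp: less_imp_le)
    show "incseq A" unfolding incseq_def A_def
    proof (intro allI impI subsetI)
      fix i j :: nat and \<omega> assume ij: "i \<le> j" and "\<omega> \<in> {\<omega>\<in>space M. c < Y u (bs i) \<omega>}"
      moreover have "bs j \<le> bs i" using ij by (simp add: bs_def frac_le)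
      moreover have "Y u (bs i) \<omega> \<le> Y u (bs j) \<omega>" if "\<omega> \<in> space M" "bs j \<le> bs i"
        using Y_anti[OF that(1) u] that(2) bs[of i] bs[of j] by auto
      ultimately show "\<omega> \<in> {\<omega>\<in>space M. c < Y u (bs j) \<omega>}" by fastforce
    qed
    show "prob (A n) \<le> 1/2" for n
      unfolding A_def using prob_compl_le2[OF Y_meas[OF u, of "bs n"], of c] H[OF bs[of n]] bs[of n]
      by auto
  qed
  ultimately have "prob {\<omega>\<in>space M. c < Y u 0 \<omega>} \<le> 1/2" by simp
  then show ?thesis using prob_compl_le2[OF Y_meas[OF u, of 0], of c] by simp
qed

end


context prob_space
begin

definition umed :: "('a \<Rightarrow> real) \<Rightarrow> real" where
  "umed Z = Sup {t. 1/2 \<le> prob {\<omega>\<in>space M. t \<le> Z \<omega>}}"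

lemma umed_props:
  fixes Z :: "'a \<Rightarrow> real"
  assumes Z: "Z \<in> borel_measurable M"
  shows "{t. 1/2 \<le> prob {\<omega>\<in>space M. t \<le> Z \<omega>}} \<noteq> {}"
    and "bdd_above {t. 1/2 \<le> prob {\<omega>\<in>space M. t \<le> Z \<omega>}}"
proof -
  define A where "A n = {\<omega>\<in>space M. - real n \<le> Z \<omega>}" for n :: nat
  have "(\<lambda>n. prob (A n)) \<longlonglongrightarrow> prob (\<Union>n. A n)"
  proof (rule Lim_measure_incseq)
    show "range A \<subseteq> sets M" using Z by (auto simp: A_def)
    show "incseq A" by (auto simp: incseq_def A_def intro: order_trans[rotated])
  qed auto
  moreover have "(\<Union>n. A n) = space M"
  proof (intro equalityI subsetI)
    fix \<omega> assume sp: "\<omega> \<in> space M"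
    obtain n :: nat where "- Z \<omega> \<le> real n" using real_arch_simple by blast
    then have "\<omega> \<in> A n" using sp by (auto simp: A_def)
    then show "\<omega> \<in> (\<Union>n. A n)" by blast
  qed (auto simp: A_def)
  ultimately have "(\<lambda>n. prob (A n)) \<longlonglongrightarrow> 1" using prob_space by simp
  then have "eventually (\<lambda>n. 1/2 < prob (A n)) sequentially" by (rule order_tendstoD) simp
  then obtain n where "1/2 < prob (A n)" by (auto simp: eventually_sequentially)
  then have "- real n \<in> {t. 1/2 \<le> prob {\<omega>\<in>space M. t \<le> Z \<omega>}}" unfolding A_def by simp
  then show "{t. 1/2 \<le> prob {\<omega>\<in>space M. t \<le> Z \<omega>}} \<noteq> {}" by blast
next
  define A where "A n = {\<omega>\<in>space M. real n \<le> Z \<omega>}" for n :: nat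
  have "(\<lambda>n. prob (A n)) \<longlonglongrightarrow> prob (\<Inter>n. A n)"
  proof (rule Lim_measure_decseq)
    show "range A \<subseteq> sets M" using Z by (auto simp: A_def)
    show "decseq A" by (auto simp: decseq_def A_def intro: order_trans[rotated])
  qed auto
  moreover have "(\<Inter>n. A n) = {}"
  proof (intro equalityI subsetI)
    fix \<omega> assume "\<omega> \<in> (\<Inter>n. A n)"
    then have "\<And>n. real n \<le> Z \<omega>" by (auto simp: A_def)
    moreover obtain n :: nat where "Z \<omega> < real n" using reals_Archimedean2 by blast
    ultimately show "\<omega> \<in> {}" by (metis not_le)
  qed auto
  ultimately have "(\<lambda>n. prob (A n)) \<longlonglongrightarrow> 0" by simp
  then have "eventually (\<lambda>n. prob (A n) < 1/2) sequentially" by (rule order_tendstoD) simp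
  then obtain n where n: "prob (A n) < 1/2" by (auto simp: eventually_sequentially)
  show "bdd_above {t. 1/2 \<le> prob {\<omega>\<in>space M. t \<le> Z \<omega>}}"
  proof (rule bdd_aboveI)
    fix t assume t: "t \<in> {t. 1/2 \<le> prob {\<omega>\<in>space M. t \<le> Z \<omega>}}"
    show "t \<le> real n"
    proof (rule ccontr)
      assume "\<not> t \<le> real n"
      then have "prob {\<omega>\<in>space M. t \<le> Z \<omega>} \<le> prob (A n)"
        using Z by (intro finite_measure_mono) (auto simp: A_def)
      then show False using t n by simp
    qed
  qed
qed

lemma umed_lt:
  fixes Z :: "'a \<Rightarrow> real"
  assumes Z: "Z \<in> borel_measurable M" and t: "t < umed Z"
  shows "1/2 \<le> prob {\<omega>\<in>space M. t \<le> Z \<omega>}"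
proof -
  obtain t' where t': "1/2 \<le> prob {\<omega>\<in>space M. t' \<le> Z \<omega>}" "t < t'"
    using less_cSupD[OF umed_props(1)[OF Z]] t unfolding umed_def by blast
  have "prob {\<omega>\<in>space M. t' \<le> Z \<omega>} \<le> prob {\<omega>\<in>space M. t \<le> Z \<omega>}"
    using Z t' by (intro finite_measure_mono) auto
  then show ?thesis using t' by simp
qed

lemma umed_ge:
  fixes Z :: "'a \<Rightarrow> real"
  assumes Z: "Z \<in> borel_measurable M" and t: "1/2 \<le> prob {\<omega>\<in>space M. t \<le> Z \<omega>}"
  shows "t \<le> umed Z"
  unfolding umed_def using t by (intro cSup_upper umed_props(2)[OF Z]) simp

lemma umed_med:
  fixes Z :: "'a \<Rightarrow> real"
  assumes Z: "Z \<in> borel_measurable M"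
  shows "ismed Z (umed Z)"
proof -
  have "1/2 \<le> prob {\<omega>\<in>space M. umed Z \<le> Z \<omega>}"
    by (rule P_ge_lim[OF Z]) (rule umed_lt[OF Z])
  moreover have "1/2 \<le> prob {\<omega>\<in>space M. Z \<omega> \<le> umed Z}"
  proof (rule P_le_lim[OF Z])
    fix t assume t: "umed Z < t"
    then have "\<not> 1/2 \<le> prob {\<omega>\<in>space M. t \<le> Z \<omega>}" using umed_ge[OF Z] by force
    then have "1/2 < prob {\<omega>\<in>space M. Z \<omega> < t}" using prob_compl_le[OF Z, of t] by simp
    moreover have "prob {\<omega>\<in>space M. Z \<omega> < t} \<le> prob {\<omega>\<in>space M. Z \<omega> \<le> t}"
      using Z by (intro finite_measure_mono) auto
    ultimately show "1/2 \<le> prob {\<omega>\<in>space M. Z \<omega> \<le> t}" by simp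
  qed
  ultimately show ?thesis by (simp add: ismed_def)
qed

lemma umed_mono:
  fixes Z1 Z2 :: "'a \<Rightarrow> real"
  assumes Z1: "Z1 \<in> borel_measurable M" and Z2: "Z2 \<in> borel_measurable M"
    and le: "\<And>\<omega>. \<omega> \<in> space M \<Longrightarrow> Z1 \<omega> \<le> Z2 \<omega>"
  shows "umed Z1 \<le> umed Z2"
proof (rule umed_ge[OF Z2])
  have "prob {\<omega>\<in>space M. umed Z1 \<le> Z1 \<omega>} \<le> prob {\<omega>\<in>space M. umed Z1 \<le> Z2 \<omega>}"
    using Z1 Z2 le by (intro finite_measure_mono) (auto intro: order_trans)
  then show "1/2 \<le> prob {\<omega>\<in>space M. umed Z1 \<le> Z2 \<omega>}"
    using umed_med[OF Z1] by (simp add: ismed_def)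
qed

lemma umed_sum:
  fixes Z1 Z2 :: "'a \<Rightarrow> real"
  assumes Z1: "Z1 \<in> borel_measurable M" and Z2: "Z2 \<in> borel_measurable M"
    and le: "\<And>\<omega>. \<omega> \<in> space M \<Longrightarrow> 0 \<le> Z1 \<omega> + Z2 \<omega>"
  shows "0 \<le> umed Z1 + umed Z2"
proof (rule ccontr)
  assume "\<not> 0 \<le> umed Z1 + umed Z2"
  define t where "t = (umed Z1 - umed Z2) / 2"
  have neg: "umed Z1 + umed Z2 < 0" using \<open>\<not> 0 \<le> umed Z1 + umed Z2\<close> by simp
  have t1: "umed Z1 < t" using neg unfolding t_def by (simp add: field_simps)
  have t2: "umed Z2 < - t" using neg unfolding t_def by (simp add: field_simps)
  have "\<not> 1/2 \<le> prob {\<omega>\<in>space M. t \<le> Z1 \<omega>}" using umed_ge[OF Z1] t1 by force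
  then have "1/2 < prob {\<omega>\<in>space M. Z1 \<omega> < t}" using prob_compl_le[OF Z1, of t] by simp
  moreover have "prob {\<omega>\<in>space M. Z1 \<omega> < t} \<le> prob {\<omega>\<in>space M. - t \<le> Z2 \<omega>}"
  proof (intro finite_measure_mono)
    show "{\<omega>\<in>space M. Z1 \<omega> < t} \<subseteq> {\<omega>\<in>space M. - t \<le> Z2 \<omega>}"
    proof
      fix \<omega> assume "\<omega> \<in> {\<omega>\<in>space M. Z1 \<omega> < t}"
      then show "\<omega> \<in> {\<omega>\<in>space M. - t \<le> Z2 \<omega>}" using le[of \<omega>] by auto
    qed
    show "{\<omega>\<in>space M. - t \<le> Z2 \<omega>} \<in> events" using Z2 by auto
  qed
  ultimately have "- t \<le> umed Z2" using umed_ge[OF Z2] by simp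
  then show False using t2 by simp
qed

end

context fz
begin

definition good :: "(real \<Rightarrow> real) \<Rightarrow> bool" where
  "good A \<longleftrightarrow> (\<forall>u\<in>{-1, 1}. \<forall>a\<in>{0..1}. ismed (Y u a) (supp_fun A u a))"

definition um :: "real \<Rightarrow> real \<Rightarrow> real" where
  "um u a = umed (Y u a)"

definition mf :: "real \<Rightarrow> real \<Rightarrow> real" where
  "mf u a = (if a = 0 then Sup (um u ` {0<..1}) else um u a)"

lemma um_mono:
  assumes u: "u \<in> {-1, 1}" and ab: "0 \<le> a" "a \<le> b" "b \<le> 1"
  shows "um u b \<le> um u a"
  unfolding um_def using ab by (intro umed_mono Y_meas[OF u]) (auto intro: Y_anti[OF _ u])

lemma um_bdd: "u \<in> {-1, 1} \<Longrightarrow> bdd_above (um u ` {0<..1})"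
  by (rule bdd_aboveI[of _ "um u 0"]) (auto intro: um_mono)

lemma mf_adm:
  assumes u: "u \<in> {-1, 1}"
  shows "adm (mf u)"
  unfolding adm_def
proof (intro conjI allI impI ballI)
  fix a b :: real assume ab: "0 \<le> a" "a \<le> b" "b \<le> 1"
  show "mf u b \<le> mf u a"
  proof (cases "a = 0")
    case True
    show ?thesis
    proof (cases "b = 0")
      case False
      then have "um u b \<le> Sup (um u ` {0<..1})" using ab by (intro cSup_upper um_bdd[OF u]) auto
      then show ?thesis using True False by (simp add: mf_def)
    qed (simp add: True)
  next
    case False
    then show ?thesis using ab um_mono[OF u ab] by (simp add: mf_def)
  qed
next
  fix g x assume g: "g \<in> {0<..1}" and H: "\<forall>b\<in>{0<..<g}. x \<le> mf u b"
  have "x \<le> um u g"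
  proof (rule dense_le)
    fix t assume t: "t < x"
    have "1/2 \<le> prob {\<omega>\<in>space M. t \<le> Y u g \<omega>}"
    proof (rule LC_prob[OF u g])
      fix b assume b: "b \<in> {0<..<g}"
      then have "x \<le> mf u b" using H by blast
      then have "t < um u b" using t b by (auto simp: mf_def)
      then show "1/2 \<le> prob {\<omega>\<in>space M. t \<le> Y u b \<omega>}"
        unfolding um_def using b g by (intro umed_lt Y_meas[OF u]) auto
    qed
    then show "t \<le> um u g" unfolding um_def using g by (intro umed_ge Y_meas[OF u]) auto
  qed
  then show "x \<le> mf u g" using g by (simp add: mf_def)
next
  fix x assume H: "\<forall>b\<in>{0<..1}. mf u b \<le> x"
  have "Sup (um u ` {0<..1}) \<le> x"
    using H by (intro cSup_least) (auto simp: mf_def)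
  then show "mf u 0 \<le> x" by (simp add: mf_def)
qed

lemma mf_med:
  assumes u: "u \<in> {-1, 1}" and a: "a \<in> {0..1}"
  shows "ismed (Y u a) (mf u a)"
proof (cases "a = 0")
  case False
  then show ?thesis using a umed_med[OF Y_meas[OF u a]] by (simp add: mf_def um_def)
next
  case True
  define m0 where "m0 = Sup (um u ` {0<..1})"
  have Y0: "Y u 0 \<in> borel_measurable M" using Y_meas[OF u] by simp
  have "1/2 \<le> prob {\<omega>\<in>space M. Y u 0 \<omega> \<le> m0}"
  proof (rule RC0_prob[OF u])
    fix b :: real assume b: "b \<in> {0<..1}"
    have "um u b \<in> um u ` {0<..1}" using b by blast
    then have "um u b \<le> m0" unfolding m0_def by (intro cSup_upper um_bdd[OF u])
    then have "prob {\<omega>\<in>space M. Y u b \<omega> \<le> um u b} \<le> prob {\<omega>\<in>space M. Y u b \<omega> \<le> m0}"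
      using Y_meas[OF u, of b] b by (intro finite_measure_mono) auto
    moreover have "1/2 \<le> prob {\<omega>\<in>space M. Y u b \<omega> \<le> um u b}"
      using umed_med[OF Y_meas[OF u, of b]] b by (simp add: ismed_def um_def)
    ultimately show "1/2 \<le> prob {\<omega>\<in>space M. Y u b \<omega> \<le> m0}" by simp
  qed
  moreover have "1/2 \<le> prob {\<omega>\<in>space M. m0 \<le> Y u 0 \<omega>}"
  proof (rule P_ge_lim[OF Y0])
    fix t assume "t < m0"
    then obtain b :: real where b: "b \<in> {0<..1}" "t < um u b"
      unfolding m0_def by (auto simp: less_cSUP_iff[OF _ um_bdd[OF u]])
    then have "1/2 \<le> prob {\<omega>\<in>space M. t \<le> Y u b \<omega>}"
      unfolding um_def by (intro umed_lt Y_meas[OF u]) auto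
    moreover have "Y u b \<omega> \<le> Y u 0 \<omega>" if "\<omega> \<in> space M" for \<omega>
      using Y_anti[OF that u, of 0 b] b by auto
    then have "prob {\<omega>\<in>space M. t \<le> Y u b \<omega>} \<le> prob {\<omega>\<in>space M. t \<le> Y u 0 \<omega>}"
      using Y0 by (intro finite_measure_mono) (auto intro: order_trans)
    ultimately show "1/2 \<le> prob {\<omega>\<in>space M. t \<le> Y u 0 \<omega>}" by simp
  qed
  ultimately show ?thesis using True by (simp add: ismed_def mf_def m0_def)
qed

lemma mf_sum:
  assumes a: "a \<in> {0..1}"
  shows "0 \<le> mf 1 a + mf (-1) a"
proof -
  have s1: "0 \<le> um 1 b + um (-1) b" if "b \<in> {0..1}" for b
    unfolding um_def using that by (intro umed_sum Y_meas Y_sum) auto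
  show ?thesis
  proof (cases "a = 0")
    case True
    have "um 1 1 \<le> mf 1 0" "um (-1) 1 \<le> mf (-1) 0"
      unfolding mf_def by (auto intro!: cSup_upper um_bdd)
    then show ?thesis using s1[of 1] True by simp
  next
    case False
    then show ?thesis using s1[OF a] by (simp add: mf_def)
  qed
qed

lemma exists_good: "\<exists>A. fuzzy_Fc A \<and> good A"
proof -
  obtain A where A: "fuzzy_Fc A" "\<forall>a\<in>{0..1}. supp_fun A 1 a = mf 1 a \<and> supp_fun A (-1) a = mf (-1) a"
    using construct[OF mf_adm mf_adm] mf_sum by blast
  have "good A" unfolding good_def using A mf_med by auto
  then show ?thesis using A by blast
qed

lemma ae_to_all:
  assumes A: "fuzzy_Fc A" and u: "u \<in> {-1, 1}"
    and dense: "\<And>a0 a1. 0 \<le> a0 \<Longrightarrow> a0 < a1 \<Longrightarrow> a1 \<le> 1 \<Longrightarrow>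
        \<exists>a\<in>{a0<..<a1}. ismed (Y u a) (supp_fun A u a)"
    and g: "g \<in> {0..1}"
  shows "ismed (Y u g) (supp_fun A u g)"
proof -
  define s where "s = supp_fun A u"
  have sadm: "adm s" unfolding s_def using adm_supp[OF A u] .
  have Ym: "\<And>a. a \<in> {0..1} \<Longrightarrow> Y u a \<in> borel_measurable M" using Y_meas[OF u] by blast
  show ?thesis
  proof (cases "g = 0")
    case False
    then have g': "g \<in> {0<..1}" using g by auto
    have "1/2 \<le> prob {\<omega>\<in>space M. s g \<le> Y u g \<omega>}"
    proof (rule LC_prob[OF u g'])
      fix b assume b: "b \<in> {0<..<g}"
      obtain a where a: "a \<in> {b<..<g}" "ismed (Y u a) (s a)" using dense[of b g] b g' by (auto simp: s_def)
      have "s g \<le> s a" using adm_D(1)[OF sadm, of a g] a b g' by auto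
      moreover have "Y u a \<omega> \<le> Y u b \<omega>" if "\<omega> \<in> space M" for \<omega>
        using Y_anti[OF that u, of b a] a b g' by auto
      ultimately have "prob {\<omega>\<in>space M. s a \<le> Y u a \<omega>} \<le> prob {\<omega>\<in>space M. s g \<le> Y u b \<omega>}"
        using b g' Ym[of b] by (intro finite_measure_mono) (auto intro: order_trans)
      then show "1/2 \<le> prob {\<omega>\<in>space M. s g \<le> Y u b \<omega>}" using a by (simp add: ismed_def)
    qed
    moreover have "1/2 \<le> prob {\<omega>\<in>space M. Y u g \<omega> \<le> s g}"
    proof (rule P_le_lim[OF Ym[OF g]])
      fix t assume t: "s g < t"
      have "\<not> (\<forall>b\<in>{0<..<g}. t \<le> s b)"
      proof
        assume "\<forall>b\<in>{0<..<g}. t \<le> s b"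
        then have "t \<le> s g" using adm_D(2)[OF sadm g'] by blast
        then show False using t by simp
      qed
      then obtain b where b: "b \<in> {0<..<g}" "s b < t" by (auto simp: not_le)
      obtain a where a: "a \<in> {b<..<g}" "ismed (Y u a) (s a)" using dense[of b g] b g' by (auto simp: s_def)
      have "s a \<le> s b" using adm_D(1)[OF sadm, of b a] a b g' by auto
      then have "Y u g \<omega> \<le> t" if "\<omega> \<in> space M" "Y u a \<omega> \<le> s a" for \<omega>
        using Y_anti[OF that(1) u, of a g] a b g' that(2) \<open>s b < t\<close> by auto
      then have "prob {\<omega>\<in>space M. Y u a \<omega> \<le> s a} \<le> prob {\<omega>\<in>space M. Y u g \<omega> \<le> t}"
        using b Ym[OF g] t by (intro finite_measure_mono) (auto intro: order_trans)
      then show "1/2 \<le> prob {\<omega>\<in>space M. Y u g \<omega> \<le> t}" using a by (simp add: ismed_def)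
    qed
    ultimately show ?thesis by (simp add: ismed_def s_def)
  next
    case True
    have "1/2 \<le> prob {\<omega>\<in>space M. Y u 0 \<omega> \<le> s 0}"
    proof (rule RC0_prob[OF u])
      fix b :: real assume b: "b \<in> {0<..1}"
      obtain a where a: "a \<in> {0<..<b}" "ismed (Y u a) (s a)" using dense[of 0 b] b by (auto simp: s_def)
      have "s a \<le> s 0" using adm_D(1)[OF sadm, of 0 a] a b by auto
      moreover have "Y u b \<omega> \<le> Y u a \<omega>" if "\<omega> \<in> space M" for \<omega>
        using Y_anti[OF that u, of a b] a b by auto
      ultimately have "prob {\<omega>\<in>space M. Y u a \<omega> \<le> s a} \<le> prob {\<omega>\<in>space M. Y u b \<omega> \<le> s 0}"
        using b Ym[of b] by (intro finite_measure_mono) (auto intro: order_trans)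
      then show "1/2 \<le> prob {\<omega>\<in>space M. Y u b \<omega> \<le> s 0}" using a by (simp add: ismed_def)
    qed
    moreover have "1/2 \<le> prob {\<omega>\<in>space M. s 0 \<le> Y u 0 \<omega>}"
    proof (rule P_ge_lim[OF Ym])
      fix t assume t: "t < s 0"
      have "\<not> (\<forall>b\<in>{0<..1}. s b \<le> t)"
      proof
        assume "\<forall>b\<in>{0<..1}. s b \<le> t"
        then have "s 0 \<le> t" using adm_D(3)[OF sadm] by blast
        then show False using t by simp
      qed
      then obtain b where b: "b \<in> {0<..1}" "t < s b" by (auto simp: not_le)
      obtain a where a: "a \<in> {0<..<b}" "ismed (Y u a) (s a)" using dense[of 0 b] b by (auto simp: s_def)
      have "s b \<le> s a" using adm_D(1)[OF sadm, of a b] a b by auto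
      then have "t \<le> Y u 0 \<omega>" if "\<omega> \<in> space M" "s a \<le> Y u a \<omega>" for \<omega>
        using Y_anti[OF that(1) u, of 0 a] a b that(2) by auto
      then have "prob {\<omega>\<in>space M. s a \<le> Y u a \<omega>} \<le> prob {\<omega>\<in>space M. t \<le> Y u 0 \<omega>}"
        using Ym[of 0] t by (intro finite_measure_mono) (auto intro: order_trans)
      then show "1/2 \<le> prob {\<omega>\<in>space M. t \<le> Y u 0 \<omega>}" using a by (simp add: ismed_def)
    qed simp
    ultimately show ?thesis using True by (simp add: ismed_def s_def)
  qed
qed

end


definition cl :: "real \<Rightarrow> real" where "cl a = max 0 (min 1 a)"

definition dd :: "nat \<Rightarrow> real \<Rightarrow> real" where
  "dd n x = real_of_int \<lfloor>x * real (Suc n)\<rfloor> / real (Suc n)"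

lemma cl_01: "cl a \<in> {0..1}" by (auto simp: cl_def)
lemma cl_id: "a \<in> {0..1} \<Longrightarrow> cl a = a" by (auto simp: cl_def)
lemma cl_mono: "a \<le> b \<Longrightarrow> cl a \<le> cl b" by (auto simp: cl_def)

lemma dd_props:
  assumes x: "x \<in> {0..1}"
  shows "0 \<le> dd n x" "dd n x \<le> x" "x - 1 / real (Suc n) < dd n x"
proof -
  have p: "0 < real (Suc n)" by simp
  have "0 \<le> x * real (Suc n)" using x by simp
  then have "0 \<le> \<lfloor>x * real (Suc n)\<rfloor>" by simp
  then show "0 \<le> dd n x" by (simp add: dd_def)
  have "real_of_int \<lfloor>x * real (Suc n)\<rfloor> \<le> x * real (Suc n)" by (rule of_int_floor_le)
  then show "dd n x \<le> x" using p by (simp add: dd_def divide_le_eq)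
  have "x * real (Suc n) - 1 < real_of_int \<lfloor>x * real (Suc n)\<rfloor>" by linarith
  then have "(x * real (Suc n) - 1) / real (Suc n) < real_of_int \<lfloor>x * real (Suc n)\<rfloor> / real (Suc n)"
    using p by (intro divide_strict_right_mono) auto
  then show "x - 1 / real (Suc n) < dd n x" using p by (simp add: dd_def diff_divide_distrib)
qed

lemma dd_conv:
  assumes s: "adm s" and x: "x \<in> {0..1}"
  shows "(\<lambda>n. s (dd n x)) \<longlonglongrightarrow> s x"
proof (cases "x = 0")
  case True
  then show ?thesis by (simp add: dd_def)
next
  case False
  then have x': "x \<in> {0<..1}" using x by auto
  show ?thesis
  proof (rule order_tendstoI)
    fix y assume yl: "y < s x"
    have "s x \<le> s (dd n x)" for n using adm_D(1)[OF s, of "dd n x" x] dd_props[OF x] x by auto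
    then have "\<forall>n. y < s (dd n x)" using yl by (auto intro: less_le_trans)
    then show "eventually (\<lambda>n. y < s (dd n x)) sequentially" by (rule always_eventually)
  next
    fix y assume y: "s x < y"
    have "\<not> (\<forall>b\<in>{0<..<x}. y \<le> s b)"
    proof
      assume "\<forall>b\<in>{0<..<x}. y \<le> s b"
      then have "y \<le> s x" using adm_D(2)[OF s x'] by blast
      then show False using y by simp
    qed
    then obtain b where b: "b \<in> {0<..<x}" "s b < y" by (auto simp: not_le)
    obtain N where N: "1 / real (Suc N) < x - b" using nat_approx_posE[of "x - b"] b by auto
    have "s (dd n x) < y" if n: "N \<le> n" for n
    proof -
      have "1 / real (Suc n) \<le> 1 / real (Suc N)" using n by (simp add: frac_le)
      then have "b \<le> dd n x" using dd_props(3)[OF x, of n] N by linarith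
      then have "s (dd n x) \<le> s b" using adm_D(1)[OF s, of b "dd n x"] b dd_props(2)[OF x, of n] x by auto
      then show ?thesis using b by simp
    qed
    then show "eventually (\<lambda>n. s (dd n x) < y) sequentially" by (auto simp: eventually_sequentially)
  qed
qed

context fz
begin

lemma joint_meas:
  assumes u: "u \<in> {-1, 1}"
  shows "(\<lambda>p. Y u (cl (snd p)) (fst p)) \<in> borel_measurable (M \<Otimes>\<^sub>M lborel)"
proof (rule borel_measurable_LIMSEQ_real)
  fix n
  let ?g = "\<lambda>p::'a \<times> real. \<lfloor>cl (snd p) * real (Suc n)\<rfloor>"
  let ?f = "\<lambda>(k::int) (p::'a \<times> real). Y u (cl (real_of_int k / real (Suc n))) (fst p)"
  have "(\<lambda>p. ?f (?g p) p) \<in> borel_measurable (M \<Otimes>\<^sub>M lborel)"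
  proof (rule measurable_compose_countable[where f="?f" and g="?g"])
    fix k :: int
    have "Y u (cl (real_of_int k / real (Suc n))) \<in> borel_measurable M"
      using Y_meas[OF u cl_01] .
    then show "?f k \<in> borel_measurable (M \<Otimes>\<^sub>M lborel)"
      by (rule measurable_compose[OF measurable_fst, rotated])
  next
    have "(\<lambda>p::'a \<times> real. cl (snd p) * real (Suc n)) \<in> borel_measurable (M \<Otimes>\<^sub>M lborel)"
      unfolding cl_def by measurable
    then show "?g \<in> measurable (M \<Otimes>\<^sub>M lborel) (count_space UNIV)"
      by (rule measurable_compose[OF _ measurable_real_floor])
  qed
  then show "(\<lambda>p. Y u (cl (dd n (cl (snd p)))) (fst p)) \<in> borel_measurable (M \<Otimes>\<^sub>M lborel)"
    by (simp add: dd_def)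
next
  fix p :: "'a \<times> real" assume "p \<in> space (M \<Otimes>\<^sub>M lborel)"
  then have sp: "fst p \<in> space M" by (auto simp: space_pair_measure)
  have "(\<lambda>n. Y u (dd n (cl (snd p))) (fst p)) \<longlonglongrightarrow> Y u (cl (snd p)) (fst p)"
    by (rule dd_conv[OF Y_adm[OF sp u] cl_01])
  moreover have "cl (dd n (cl (snd p))) = dd n (cl (snd p))" for n
    using dd_props[OF cl_01[of "snd p"], of n] cl_01[of "snd p"] by (intro cl_id) auto
  ultimately show "(\<lambda>n. Y u (cl (dd n (cl (snd p)))) (fst p)) \<longlonglongrightarrow> Y u (cl (snd p)) (fst p)"
    by simp
qed

end

lemma s_meas:
  assumes A: "fuzzy_Fc A" and u: "u \<in> {-1, 1}"
  shows "(\<lambda>a. supp_fun A u (cl a)) \<in> borel_measurable borel"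
proof -
  have "mono (\<lambda>a. - supp_fun A u (cl a))"
  proof (rule monoI)
    fix a b :: real assume "a \<le> b"
    then have "supp_fun A u (cl b) \<le> supp_fun A u (cl a)"
      using adm_D(1)[OF adm_supp[OF A u], of "cl a" "cl b"] cl_01[of a] cl_01[of b] cl_mono by auto
    then show "- supp_fun A u (cl a) \<le> - supp_fun A u (cl b)" by simp
  qed
  then have "(\<lambda>a. - supp_fun A u (cl a)) \<in> borel_measurable borel" by (rule borel_measurable_mono)
  then show ?thesis by simp
qed


lemma supp_integrable:
  assumes B: "fuzzy_Fc B" and C: "fuzzy_Fc C" and u: "u \<in> {-1, 1}"
  shows "(\<lambda>a. \<bar>supp_fun B u a - supp_fun C u a\<bar>) integrable_on {0..1}"
proof -
  have m: "mono_on {0..1} (\<lambda>a. - supp_fun D u a)" if D: "fuzzy_Fc D" for D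
    using adm_D(1)[OF adm_supp[OF D u]] by (auto simp: mono_on_def)
  have "integrable (lebesgue_on {0..1}) (\<lambda>a. \<bar>(- supp_fun C u a) - (- supp_fun B u a)\<bar>)"
    by (intro integrable_abs Bochner_Integration.integrable_diff integrable_mono_on m B C)
  then have "integrable (lebesgue_on {0..1}) (\<lambda>a. \<bar>supp_fun B u a - supp_fun C u a\<bar>)"
    by (simp add: abs_minus_commute)
  then show ?thesis by (rule integrable_on_lebesgue_on) simp
qed

context fz
begin

definition Phi :: "(real \<Rightarrow> real) \<Rightarrow> ennreal" where
  "Phi B = (\<integral>\<^sup>+ \<omega>. ennreal (rho1 B (X \<omega>)) \<partial>M)"

definition Kf :: "(real \<Rightarrow> real) \<Rightarrow> real \<Rightarrow> real \<Rightarrow> ennreal" where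
  "Kf B u a = (\<integral>\<^sup>+ \<omega>. ennreal \<bar>supp_fun B u a - Y u a \<omega>\<bar> \<partial>M)"

definition L :: "(real \<Rightarrow> real) \<Rightarrow> real \<Rightarrow> ennreal" where
  "L B u = (\<integral>\<^sup>+ a. indicator {0..1} a * Kf B u a \<partial>lborel)"

definition FF :: "(real \<Rightarrow> real) \<Rightarrow> real \<Rightarrow> 'a \<times> real \<Rightarrow> ennreal" where
  "FF B u p = ennreal (indicator {0..1} (snd p) * \<bar>supp_fun B u (cl (snd p)) - Y u (cl (snd p)) (fst p)\<bar>)"

lemma FF_meas:
  assumes B: "fuzzy_Fc B" and u: "u \<in> {-1, 1}"
  shows "FF B u \<in> borel_measurable (M \<Otimes>\<^sub>M lborel)"
proof -
  have [measurable]: "(\<lambda>p. Y u (cl (snd p)) (fst p)) \<in> borel_measurable (M \<Otimes>\<^sub>M lborel)"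
    by (rule joint_meas[OF u])
  have sm: "(\<lambda>a. supp_fun B u (cl a)) \<in> borel_measurable lborel" using s_meas[OF B u] by simp
  have [measurable]: "(\<lambda>p. supp_fun B u (cl (snd p))) \<in> borel_measurable (M \<Otimes>\<^sub>M lborel)"
    by (rule measurable_compose[OF measurable_snd sm])
  show ?thesis unfolding FF_def by measurable
qed

lemma FF_int:
  assumes B: "fuzzy_Fc B" and u: "u \<in> {-1, 1}" and sp: "\<omega> \<in> space M"
  shows "ennreal (integral {0..1} (\<lambda>a. \<bar>supp_fun B u a - supp_fun (X \<omega>) u a\<bar>))
      = (\<integral>\<^sup>+ a. FF B u (\<omega>, a) \<partial>lborel)"
proof -
  let ?f = "\<lambda>a. \<bar>supp_fun B u a - supp_fun (X \<omega>) u a\<bar>"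
  have "(?f has_integral integral {0..1} ?f) {0..1}"
    using supp_integrable[OF B XFc[OF sp] u] by (rule integrable_integral)
  then have "(\<integral>\<^sup>+ x. ennreal (indicator {0..1} x * ?f x) \<partial>lborel) = ennreal (integral {0..1} ?f)"
    by (intro nn_integral_has_integral_lebesgue) auto
  moreover have "(\<integral>\<^sup>+ x. ennreal (indicator {0..1} x * ?f x) \<partial>lborel) = (\<integral>\<^sup>+ a. FF B u (\<omega>, a) \<partial>lborel)"
    by (intro nn_integral_cong) (auto simp: FF_def Y_def indicator_def cl_id)
  ultimately show ?thesis by simp
qed

lemma FF_int2:
  assumes u: "u \<in> {-1, 1}"
  shows "(\<integral>\<^sup>+ \<omega>. FF B u (\<omega>, a) \<partial>M) = indicator {0..1} a * Kf B u a"
proof (cases "a \<in> {0..1}")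
  case True
  then show ?thesis by (simp add: FF_def Kf_def cl_id)
next
  case False
  then show ?thesis by (simp add: FF_def)
qed

lemma rho1_eq:
  assumes B: "fuzzy_Fc B" and sp: "\<omega> \<in> space M"
  shows "ennreal (rho1 B (X \<omega>)) = ennreal (1/2) * ((\<integral>\<^sup>+ a. FF B (-1) (\<omega>, a) \<partial>lborel) + (\<integral>\<^sup>+ a. FF B 1 (\<omega>, a) \<partial>lborel))"
proof -
  let ?I = "\<lambda>u. integral {0..1} (\<lambda>a. \<bar>supp_fun B u a - supp_fun (X \<omega>) u a\<bar>)"
  have nn: "0 \<le> ?I u" if "u \<in> {-1, 1}" for u
    using supp_integrable[OF B XFc[OF sp] that] by (rule integral_nonneg) simp
  have r: "rho1 B (X \<omega>) = 1/2 * ?I (-1) + 1/2 * ?I 1" unfolding rho1_def by simp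
  have n1: "0 \<le> ?I (-1)" and n2: "0 \<le> ?I 1" using nn by auto
  have "ennreal (1/2 * ?I (-1) + 1/2 * ?I 1) = ennreal (1/2 * ?I (-1)) + ennreal (1/2 * ?I 1)"
    using n1 n2 by (intro ennreal_plus) auto
  also have "\<dots> = ennreal (1/2) * ennreal (?I (-1)) + ennreal (1/2) * ennreal (?I 1)"
    using n1 n2 by (simp only: ennreal_mult)
  also have "\<dots> = ennreal (1/2) * (ennreal (?I (-1)) + ennreal (?I 1))"
    by (simp only: distrib_left)
  finally have "ennreal (rho1 B (X \<omega>)) = ennreal (1/2) * (ennreal (?I (-1)) + ennreal (?I 1))"
    unfolding r .
  then show ?thesis unfolding FF_int[OF B _ sp, of "-1", simplified] FF_int[OF B _ sp, of 1, simplified] .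
qed

lemma Phi_eq:
  assumes B: "fuzzy_Fc B"
  shows "Phi B = ennreal (1/2) * (L B (-1) + L B 1)"
proof -
  interpret P: pair_sigma_finite M lborel ..
  have mJ: "(\<lambda>\<omega>. \<integral>\<^sup>+ a. FF B u (\<omega>, a) \<partial>lborel) \<in> borel_measurable M" if u: "u \<in> {-1, 1}" for u
    using lborel.borel_measurable_nn_integral_fst[OF FF_meas[OF B u]] .
  have sw: "(\<integral>\<^sup>+ \<omega>. (\<integral>\<^sup>+ a. FF B u (\<omega>, a) \<partial>lborel) \<partial>M) = L B u" if u: "u \<in> {-1, 1}" for u
  proof -
    have "case_prod (\<lambda>\<omega> a. FF B u (\<omega>, a)) \<in> borel_measurable (M \<Otimes>\<^sub>M lborel)"
      using FF_meas[OF B u] by simp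
    then have "(\<integral>\<^sup>+ a. (\<integral>\<^sup>+ \<omega>. FF B u (\<omega>, a) \<partial>M) \<partial>lborel) = (\<integral>\<^sup>+ \<omega>. (\<integral>\<^sup>+ a. FF B u (\<omega>, a) \<partial>lborel) \<partial>M)"
      by (rule P.Fubini')
    then show ?thesis unfolding L_def FF_int2[OF u] by simp
  qed
  have "Phi B = (\<integral>\<^sup>+ \<omega>. ennreal (1/2) * ((\<integral>\<^sup>+ a. FF B (-1) (\<omega>, a) \<partial>lborel) + (\<integral>\<^sup>+ a. FF B 1 (\<omega>, a) \<partial>lborel)) \<partial>M)"
    unfolding Phi_def by (intro nn_integral_cong) (simp add: rho1_eq[OF B])
  also have "\<dots> = ennreal (1/2) * ((\<integral>\<^sup>+ \<omega>. (\<integral>\<^sup>+ a. FF B (-1) (\<omega>, a) \<partial>lborel) \<partial>M) + (\<integral>\<^sup>+ \<omega>. (\<integral>\<^sup>+ a. FF B 1 (\<omega>, a) \<partial>lborel) \<partial>M))"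
    using mJ[of "-1"] mJ[of 1] by (simp add: nn_integral_cmult nn_integral_add)
  also have "\<dots> = ennreal (1/2) * (L B (-1) + L B 1)" using sw[of "-1"] sw[of 1] by simp
  finally show ?thesis .
qed

lemma L_meas:
  assumes B: "fuzzy_Fc B" and u: "u \<in> {-1, 1}"
  shows "(\<lambda>a. indicator {0..1} a * Kf B u a) \<in> borel_measurable lborel"
proof -
  have "(\<lambda>(a, \<omega>). FF B u (\<omega>, a)) \<in> borel_measurable (lborel \<Otimes>\<^sub>M M)"
    using measurable_pair_swap[OF FF_meas[OF B u]] .
  then have "(\<lambda>q. FF B u (snd q, fst q)) \<in> borel_measurable (lborel \<Otimes>\<^sub>M M)"
    by (simp add: case_prod_beta')
  from borel_measurable_nn_integral_fst[OF this]
  have "(\<lambda>a. \<integral>\<^sup>+ \<omega>. FF B u (\<omega>, a) \<partial>M) \<in> borel_measurable lborel" by simp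
  then show ?thesis unfolding FF_int2[OF u] .
qed

lemma supp_bound:
  assumes B: "fuzzy_Fc B" and u: "u \<in> {-1, 1}" and a: "a \<in> {0..1}"
  shows "\<bar>supp_fun B u a\<bar> \<le> \<bar>supp_fun B 1 0\<bar> + \<bar>supp_fun B (-1) 0\<bar>"
proof -
  have "supp_fun B 1 a \<le> supp_fun B 1 0" "supp_fun B (-1) a \<le> supp_fun B (-1) 0"
    using adm_D(1)[OF adm_hi[OF B], of 0 a] adm_D(1)[OF adm_lo[OF B], of 0 a] a by auto
  moreover have "0 \<le> supp_fun B 1 a + supp_fun B (-1) a" using supp_sum_nonneg[OF B a] .
  ultimately show ?thesis using u by auto
qed

lemma Kf_eq:
  assumes u: "u \<in> {-1, 1}" and a: "a \<in> {0..1}"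
  shows "Kf B u a = ennreal (expectation (\<lambda>\<omega>. \<bar>Y u a \<omega> - supp_fun B u a\<bar>))"
proof -
  have "Kf B u a = (\<integral>\<^sup>+ \<omega>. ennreal \<bar>Y u a \<omega> - supp_fun B u a\<bar> \<partial>M)"
    unfolding Kf_def by (simp add: abs_minus_commute)
  also have "\<dots> = ennreal (expectation (\<lambda>\<omega>. \<bar>Y u a \<omega> - supp_fun B u a\<bar>))"
    by (intro nn_integral_eq_integral Yc_int[OF u a]) auto
  finally show ?thesis .
qed

lemma L_fin:
  assumes B: "fuzzy_Fc B" and u: "u \<in> {-1, 1}"
  shows "L B u < \<infinity>"
proof -
  define C where "C = \<bar>supp_fun B 1 0\<bar> + \<bar>supp_fun B (-1) 0\<bar>"
  define E where "E = expectation (norm0 X) + C"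
  have KE: "Kf B u a \<le> ennreal E" if a: "a \<in> {0..1}" for a
  proof -
    have "expectation (\<lambda>\<omega>. \<bar>Y u a \<omega> - supp_fun B u a\<bar>) \<le> expectation (\<lambda>\<omega>. norm0 X \<omega> + C)"
    proof (rule integral_mono)
      show "integrable M (\<lambda>\<omega>. \<bar>Y u a \<omega> - supp_fun B u a\<bar>)" by (rule Yc_int[OF u a])
      show "integrable M (\<lambda>\<omega>. norm0 X \<omega> + C)" using norm0_int by auto
      fix \<omega> assume sp: "\<omega> \<in> space M"
      show "\<bar>Y u a \<omega> - supp_fun B u a\<bar> \<le> norm0 X \<omega> + C"
        using Y_bound[OF sp u a] supp_bound[OF B u a] by (simp add: C_def)
    qed
    also have "\<dots> = E" using norm0_int by (simp add: E_def prob_space)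
    finally show ?thesis unfolding Kf_eq[OF u a] by (intro ennreal_leI)
  qed
  have "L B u \<le> (\<integral>\<^sup>+ a. indicator {0..1::real} a * ennreal E \<partial>lborel)"
    unfolding L_def
  proof (intro nn_integral_mono)
    fix a
    show "indicator {0..1} a * Kf B u a \<le> indicator {0..1} a * ennreal E"
      using KE[of a] by (cases "a \<in> {0..1}") auto
  qed
  also have "\<dots> = ennreal E" by (simp add: nn_integral_cmult_indicator mult.commute)
  finally show ?thesis using ennreal_less_top[of E] by (simp add: le_less_trans)
qed

end


lemma ae_dense:
  assumes ae: "AE a in lborel. (a \<in> {0..1} \<longrightarrow> P a)" and a: "0 \<le> a0" "a0 < a1" "a1 \<le> (1::real)"
  shows "\<exists>a\<in>{a0<..<a1}. P a"
proof (rule ccontr)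
  assume H: "\<not> (\<exists>a\<in>{a0<..<a1}. P a)"
  from ae obtain N where N: "{x \<in> space lborel. \<not> (x \<in> {0..1} \<longrightarrow> P x)} \<subseteq> N" "emeasure lborel N = 0" "N \<in> sets lborel"
    by (rule AE_E)
  have "{a0<..<a1} \<subseteq> N" using N(1) H a by auto
  then have "emeasure lborel {a0<..<a1} \<le> emeasure lborel N" using N(3) by (intro emeasure_mono)
  then show False using N(2) a by simp
qed

context fz
begin

lemma Kf_le_good:
  assumes A: "good A" and u: "u \<in> {-1, 1}" and a: "a \<in> {0..1}"
  shows "Kf A u a \<le> Kf U u a"
  unfolding Kf_eq[OF u a]
  using M1[OF Y_int[OF u a], of "supp_fun A u a" "supp_fun U u a"] A u a
  by (intro ennreal_leI) (auto simp: good_def)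

lemma L_le_good:
  assumes A: "good A" and u: "u \<in> {-1, 1}"
  shows "L A u \<le> L U u"
  unfolding L_def
proof (intro nn_integral_mono)
  fix a
  show "indicator {0..1} a * Kf A u a \<le> indicator {0..1} a * Kf U u a"
    using Kf_le_good[OF A u, of a U] by (cases "a \<in> {0..1}") auto
qed

lemma Phi_le_good:
  assumes A: "fuzzy_Fc A" "good A" and U: "fuzzy_Fc U"
  shows "Phi A \<le> Phi U"
  unfolding Phi_eq[OF A(1)] Phi_eq[OF U]
  using L_le_good[OF A(2), of "-1" U] L_le_good[OF A(2), of 1 U]
  by (intro mult_left_mono add_mono) auto

lemma Phi_fin:
  assumes B: "fuzzy_Fc B"
  shows "Phi B < \<infinity>"
  unfolding Phi_eq[OF B]
  using L_fin[OF B, of "-1"] L_fin[OF B, of 1] ennreal_less_top[of "1/2"] by (simp add: ennreal_mult_less_top)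

lemma good_of_Phi:
  assumes A: "fuzzy_Fc A" and S: "fuzzy_Fc S" "good S" and le: "Phi A \<le> Phi S"
  shows "good A"
proof -
  let ?a1 = "L A (-1)" and ?b1 = "L A 1" and ?a2 = "L S (-1)" and ?b2 = "L S 1"
  have h: "ennreal (1/2) * (?a1 + ?b1) \<le> ennreal (1/2) * (?a2 + ?b2)"
    using le unfolding Phi_eq[OF A] Phi_eq[OF S(1)] .
  have two: "ennreal 2 * ennreal (1/2) = 1"
  proof -
    have "ennreal (2 * (1/2)) = ennreal 2 * ennreal (1/2)" by (rule ennreal_mult) auto
    then show ?thesis by simp
  qed
  have "ennreal 2 * (ennreal (1/2) * (?a1 + ?b1)) \<le> ennreal 2 * (ennreal (1/2) * (?a2 + ?b2))"
    using h by (rule mult_left_mono) simp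
  then have sum: "?a1 + ?b1 \<le> ?a2 + ?b2" unfolding mult.assoc[symmetric] two by simp
  have a21: "?a2 \<le> ?a1" and b21: "?b2 \<le> ?b1" using L_le_good[OF S(2)] by auto
  have fa: "?a2 \<noteq> \<infinity>" using L_fin[OF S(1), of "-1"] by simp
  have fb: "?b2 \<noteq> \<infinity>" using L_fin[OF S(1), of 1] by simp
  have le_u: "L A u \<le> L S u" if u: "u \<in> {-1, 1}" for u
  proof (rule ccontr)
    assume "\<not> L A u \<le> L S u"
    then have lt: "L S u < L A u" by simp
    show False
    proof (cases "u = 1")
      case True
      have "?a2 + ?b2 < ?a2 + ?b1" using fa lt True by (simp add: ennreal_add_left_cancel_less)
      also have "\<dots> \<le> ?a1 + ?b1" using a21 by (rule add_right_mono)
      finally show False using sum by simp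
    next
      case False
      then have u1: "u = -1" using u by auto
      have "?b2 + ?a2 < ?b2 + ?a1" using fb lt u1 by (simp add: ennreal_add_left_cancel_less)
      also have "\<dots> \<le> ?b1 + ?a1" using b21 by (rule add_right_mono)
      finally show False using sum by (simp add: add.commute)
    qed
  qed
  show ?thesis unfolding good_def
  proof (intro ballI)
    fix u a :: real assume u: "u \<in> {-1, 1}" and a: "a \<in> {0..1}"
    have ae: "AE a in lborel. indicator {0..1} a * Kf A u a \<le> indicator {0..1} a * Kf S u a"
    proof (rule ccontr)
      assume nae: "\<not> (AE a in lborel. indicator {0..1} a * Kf A u a \<le> indicator {0..1} a * Kf S u a)"
      have "L S u < L A u" unfolding L_def
      proof (rule nn_integral_less)
        show "(\<lambda>a. indicator {0..1} a * Kf S u a) \<in> borel_measurable lborel" by (rule L_meas[OF S(1) u])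
        show "(\<lambda>a. indicator {0..1} a * Kf A u a) \<in> borel_measurable lborel" by (rule L_meas[OF A u])
        show "(\<integral>\<^sup>+ a. indicator {0..1} a * Kf S u a \<partial>lborel) \<noteq> \<infinity>" using L_fin[OF S(1) u] by (simp add: L_def)
        show "AE a in lborel. indicator {0..1} a * Kf S u a \<le> indicator {0..1} a * Kf A u a"
        proof (rule AE_I2)
          fix a show "indicator {0..1} a * Kf S u a \<le> indicator {0..1} a * Kf A u a"
            using Kf_le_good[OF S(2) u, of a A] by (cases "a \<in> {0..1}") auto
        qed
        show "\<not> (AE a in lborel. indicator {0..1} a * Kf A u a \<le> indicator {0..1} a * Kf S u a)" by (rule nae)
      qed
      then show False using le_u[OF u] by simp
    qed
    have ae2: "AE a in lborel. (a \<in> {0..1} \<longrightarrow> ismed (Y u a) (supp_fun A u a))"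
      using ae
    proof (rule AE_mp)
      show "AE a in lborel. indicator {0..1} a * Kf A u a \<le> indicator {0..1} a * Kf S u a \<longrightarrow>
          (a \<in> {0..1} \<longrightarrow> ismed (Y u a) (supp_fun A u a))"
      proof (rule AE_I2, intro impI)
        fix a assume h: "indicator {0..1} a * Kf A u a \<le> indicator {0..1} a * Kf S u a" and a: "a \<in> {0..1}"
        then have "Kf A u a \<le> Kf S u a" by simp
        then have "expectation (\<lambda>\<omega>. \<bar>Y u a \<omega> - supp_fun A u a\<bar>) \<le> expectation (\<lambda>\<omega>. \<bar>Y u a \<omega> - supp_fun S u a\<bar>)"
          unfolding Kf_eq[OF u a] by (rule ennreal_le_iff[THEN iffD1, rotated]) (auto intro: integral_nonneg_AE)
        moreover have "ismed (Y u a) (supp_fun S u a)" using S(2) u a by (auto simp: good_def)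
        ultimately show "ismed (Y u a) (supp_fun A u a)" using M2[OF Y_int[OF u a]] by blast
      qed
    qed
    show "ismed (Y u a) (supp_fun A u a)"
      by (rule ae_to_all[OF A u ae_dense[OF ae2] a])
  qed
qed

lemma hdep_nonneg: "0 \<le> hdep Z c"
  by (simp add: hdep_def)

lemma DFT_eq:
  "D_FT M X A = (INF p\<in>{-1, 1::real} \<times> {0..1::real}. hdep (Y (fst p) (snd p)) (supp_fun A (fst p) (snd p)))"
  by (simp add: D_FT_def hdep_def Y_def)

lemma bdd_hdep: "bdd_below ((\<lambda>p. hdep (Y (fst p) (snd p)) (supp_fun A (fst p) (snd p))) ` P)"
  by (rule bdd_belowI[of _ 0]) (auto simp: hdep_nonneg)

lemma DFT_good_max:
  assumes A: "good A"
  shows "D_FT M X U \<le> D_FT M X A"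
  unfolding DFT_eq
proof (rule cINF_greatest)
  show "{-1, 1::real} \<times> {0..1::real} \<noteq> {}" by auto
  fix p :: "real \<times> real" assume p: "p \<in> {-1, 1} \<times> {0..1}"
  have "(INF p\<in>{-1, 1::real} \<times> {0..1::real}. hdep (Y (fst p) (snd p)) (supp_fun U (fst p) (snd p)))
      \<le> hdep (Y (fst p) (snd p)) (supp_fun U (fst p) (snd p))"
    by (rule cINF_lower[OF bdd_hdep p])
  also have "\<dots> \<le> hdep (Y (fst p) (snd p)) (supp_fun A (fst p) (snd p))"
    using p A by (intro H1 Y_meas) (auto simp: good_def)
  finally show "(INF p\<in>{-1, 1::real} \<times> {0..1::real}. hdep (Y (fst p) (snd p)) (supp_fun U (fst p) (snd p)))
      \<le> hdep (Y (fst p) (snd p)) (supp_fun A (fst p) (snd p))" .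
qed

lemma DFT_half:
  assumes A: "good A"
  shows "1/2 \<le> D_FT M X A"
  unfolding DFT_eq
proof (rule cINF_greatest)
  show "{-1, 1::real} \<times> {0..1::real} \<noteq> {}" by auto
  fix p :: "real \<times> real" assume p: "p \<in> {-1, 1} \<times> {0..1}"
  then show "1/2 \<le> hdep (Y (fst p) (snd p)) (supp_fun A (fst p) (snd p))"
    using A by (intro H3) (auto simp: good_def)
qed

lemma DFT_notgood:
  assumes A: "\<not> good A"
  shows "D_FT M X A < 1/2"
proof -
  obtain u a where ua: "u \<in> {-1, 1}" "a \<in> {0..1}" "\<not> ismed (Y u a) (supp_fun A u a)"
    using A unfolding good_def by blast
  let ?p = "(u, a)"
  have "D_FT M X A \<le> hdep (Y (fst ?p) (snd ?p)) (supp_fun A (fst ?p) (snd ?p))"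
    unfolding DFT_eq using ua by (intro cINF_lower[OF bdd_hdep]) auto
  also have "\<dots> < 1/2" using ua by (intro H2 Y_meas) auto
  finally show ?thesis .
qed

lemma Med_DFT: "Med (D_FT M X) = {A. fuzzy_Fc A \<and> good A}"
proof (intro equalityI subsetI)
  fix A assume "A \<in> Med (D_FT M X)"
  then have A: "fuzzy_Fc A" and mx: "\<And>U. fuzzy_Fc U \<Longrightarrow> D_FT M X U \<le> D_FT M X A" by (auto simp: Med_def)
  obtain S where S: "fuzzy_Fc S" "good S" using exists_good by blast
  have "1/2 \<le> D_FT M X A" using DFT_half[OF S(2)] mx[OF S(1)] by simp
  then have "good A" using DFT_notgood by force
  then show "A \<in> {A. fuzzy_Fc A \<and> good A}" using A by simp
next
  fix A assume "A \<in> {A. fuzzy_Fc A \<and> good A}"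
  then show "A \<in> Med (D_FT M X)" using DFT_good_max by (auto simp: Med_def)
qed

lemma D1_le_iff:
  assumes B: "fuzzy_Fc B" and C: "fuzzy_Fc C"
  shows "D1 M X B \<le> D1 M X C \<longleftrightarrow> Phi C \<le> Phi B"
proof -
  obtain rb where rb: "0 \<le> rb" "Phi B = ennreal rb" using Phi_fin[OF B] by (auto simp: less_top_ennreal)
  obtain rc where rc: "0 \<le> rc" "Phi C = ennreal rc" using Phi_fin[OF C] by (auto simp: less_top_ennreal)
  have d: "D1 M X E = ennreal (inverse (1 + r))" if "Phi E = ennreal r" "0 \<le> r" for E r
  proof -
    have "D1 M X E = inverse (1 + ennreal r)" using that by (simp add: D1_def Phi_def)
    also have "1 + ennreal r = ennreal (1 + r)" using that by (simp add: ennreal_plus)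
    also have "inverse (ennreal (1 + r)) = ennreal (inverse (1 + r))" using that by (intro inverse_ennreal) simp
    finally show ?thesis .
  qed
  have "D1 M X B \<le> D1 M X C \<longleftrightarrow> inverse (1 + rb) \<le> inverse (1 + rc)"
    unfolding d[OF rb(2,1)] d[OF rc(2,1)] using rc by (simp add: ennreal_le_iff)
  also have "\<dots> \<longleftrightarrow> rc \<le> rb" using rb rc by simp
  also have "\<dots> \<longleftrightarrow> Phi C \<le> Phi B" using rb rc by simp
  finally show ?thesis .
qed

lemma Med_D1: "Med (D1 M X) = {A. fuzzy_Fc A \<and> good A}"
proof (intro equalityI subsetI)
  fix A assume "A \<in> Med (D1 M X)"
  then have A: "fuzzy_Fc A" and mx: "\<And>U. fuzzy_Fc U \<Longrightarrow> D1 M X U \<le> D1 M X A" by (auto simp: Med_def)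
  obtain S where S: "fuzzy_Fc S" "good S" using exists_good by blast
  have "Phi A \<le> Phi S" using mx[OF S(1)] D1_le_iff[OF S(1) A] by simp
  then have "good A" by (rule good_of_Phi[OF A S])
  then show "A \<in> {A. fuzzy_Fc A \<and> good A}" using A by simp
next
  fix A assume "A \<in> {A. fuzzy_Fc A \<and> good A}"
  then have A: "fuzzy_Fc A" "good A" by auto
  show "A \<in> Med (D1 M X)" unfolding Med_def
    using A D1_le_iff[OF _ A(1)] Phi_le_good[OF A] by auto
qed

end

theorem corollary4p5:
  fixes M :: "'a measure" and X :: "'a \<Rightarrow> real \<Rightarrow> real"
  assumes "prob_space M"
    and "fuzzy_rv M X"
    and "(\<integral>\<^sup>+ \<omega>. ennreal (norm0 X \<omega>) \<partial>M) < \<infinity>"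
  shows "Med (D1 M X) = Med (D_FT M X)"
proof -
  interpret fz M X
    using assms by (simp add: fz_def fz_axioms_def)
  show ?thesis using Med_D1 Med_DFT by simp
qed


end
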